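(* Let $\Phi=(A;\{E_i\}_{i=0}^d;A^*;\{E^*_i\}_{i=0}^d)$ be a tridiagonal system on $V$ with $d\ge1$, such that $(A,A^* )$ satisfies the $q$-Serre relations, with $E_iV$ the eigenspace of $A$ for $\theta_i=q^{2i-d}$ and $E^*_iV$ the eigenspace of $A^*$ for $\theta^*_i=q^{d-2i}$. Let $\{U_i\}_{i=0}^d$ be its split decomposition, $K:V\to V$ the linear map acting on $U_i$ as $q^{d-2i}I$, $t$ a scalar, $B=A$ and $B^*=tA^*+(1-t)K$. Then $B$ and $B^*$ satisfy the $q$-Serre relations: $$B^3B^*-[3]_qB^2B^*B+[3]_qBB^*B^2-B^*B^3=0,\qquad B^{*3}B-[3]_qB^{*2}BB^*+[3]_qB^*BB^{*2}-BB^{*3}=0.$$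
   Context: $\mathcal K$ is an algebraically closed field; $V$ is a nonzero finite-dimensional vector space over $\mathcal K$; $q\in\mathcal K$ is nonzero and not a root of unity; $[3]_q=\frac{q^3-q^{-3}}{q-q^{-1}}=q^2+1+q^{-2}$. The $q$-Serre relations for $(X,Y)$: $X^3Y-[3]_qX^2YX+[3]_qXYX^2-YX^3=0$ and $Y^3X-[3]_qY^2XY+[3]_qYXY^2-XY^3=0$. Primitive idempotent of a diagonalizable $X$ for eigenvalue $\lambda_i$: $\prod_{j\ne i}\frac{X-\lambda_jI}{\lambda_i-\lambda_j}$. A tridiagonal system on $V$ is a sequence $(A;\{E_i\}_{i=0}^d;A^*;\{E^*_i\}_{i=0}^d)$ with $A,A^*$ diagonalizable, $\{E_i\}$, $\{E^*_i\}$ orderings of their primitive idempotents, $E_iA^*E_j=0$ and $E^*_iAE^*_j=0$ when $|i-j|>1$, and no subspaces other than $0,V$ invariant under both $A$ and $A^*$. Split decomposition: $U_i=(E^*_0V+\cdots+E^*_iV)\cap(E_iV+\cdots+E_dV)$; known: $V=U_0\oplus\cdots\oplus U_d$, $(A-\theta_iI)U_i\subseteq U_{i+1}$, $(A^*-\theta^*_iI)U_i\subseteq U_{i-1}$ ($U_{-1}=U_{d+1}=0$). *)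

theory Defs
  imports "Jordan_Normal_Form.Jordan_Normal_Form"
begin

definition alg_closed :: "'a::field itself \<Rightarrow> bool" where
  "alg_closed _ \<longleftrightarrow> (\<forall>p :: 'a poly. degree p > 0 \<longrightarrow> (\<exists>x. poly p x = 0))"

definition not_root_of_unity :: "'a::field \<Rightarrow> bool" where
  "not_root_of_unity q \<longleftrightarrow> (\<forall>m::nat. m > 0 \<longrightarrow> q ^ m \<noteq> 1)"

definition qint3 :: "'a::field \<Rightarrow> 'a" where
  "qint3 q = q ^ 2 + 1 + inverse (q ^ 2)"

definition q_serre :: "nat \<Rightarrow> 'a::field \<Rightarrow> 'a mat \<Rightarrow> 'a mat \<Rightarrow> bool" where
  "q_serre n q X Y \<longleftrightarrow>
     X * X * X * Y - qint3 q \<cdot>\<^sub>m (X * X * Y * X) + qint3 q \<cdot>\<^sub>m (X * Y * X * X) - Y * X * X * X = 0\<^sub>m n n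
   \<and> Y * Y * Y * X - qint3 q \<cdot>\<^sub>m (Y * Y * X * Y) + qint3 q \<cdot>\<^sub>m (Y * X * Y * Y) - X * Y * Y * Y = 0\<^sub>m n n"

definition diagonalizable :: "'a::field mat \<Rightarrow> bool" where
  "diagonalizable X \<longleftrightarrow> (\<exists>D. similar_mat X D \<and> diagonal_mat D)"

definition prim_idem :: "nat \<Rightarrow> 'a::field mat \<Rightarrow> (nat \<Rightarrow> 'a) \<Rightarrow> nat \<Rightarrow> nat \<Rightarrow> 'a mat" where
  "prim_idem n X th d i =
     foldr (\<lambda>j M. (inverse (th i - th j) \<cdot>\<^sub>m (X - th j \<cdot>\<^sub>m 1\<^sub>m n)) * M)
           (filter (\<lambda>j. j \<noteq> i) [0..<Suc d]) (1\<^sub>m n)"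

definition is_prim_idem_ordering :: "nat \<Rightarrow> 'a::field mat \<Rightarrow> (nat \<Rightarrow> 'a mat) \<Rightarrow> nat \<Rightarrow> bool" where
  "is_prim_idem_ordering n X E d \<longleftrightarrow>
     (\<exists>th. inj_on th {0..d} \<and> {k. eigenvalue X k} = th ` {0..d}
        \<and> (\<forall>i\<le>d. E i = prim_idem n X th d i))"

definition subspace_of :: "nat \<Rightarrow> 'a::field vec set \<Rightarrow> bool" where
  "subspace_of n W \<longleftrightarrow> W \<subseteq> carrier_vec n \<and> 0\<^sub>v n \<in> W
     \<and> (\<forall>v\<in>W. \<forall>w\<in>W. v + w \<in> W) \<and> (\<forall>c. \<forall>v\<in>W. c \<cdot>\<^sub>v v \<in> W)"

definition invariant_under :: "'a::field mat \<Rightarrow> 'a vec set \<Rightarrow> bool" where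
  "invariant_under X W \<longleftrightarrow> (\<forall>w\<in>W. X *\<^sub>v w \<in> W)"

definition img :: "nat \<Rightarrow> 'a::field mat \<Rightarrow> 'a vec set" where
  "img n M = {M *\<^sub>v v | v. v \<in> carrier_vec n}"

definition eigenspace :: "nat \<Rightarrow> 'a::field mat \<Rightarrow> 'a \<Rightarrow> 'a vec set" where
  "eigenspace n X k = {v \<in> carrier_vec n. X *\<^sub>v v = k \<cdot>\<^sub>v v}"

definition subsp_sum :: "nat \<Rightarrow> (nat \<Rightarrow> 'a::field vec set) \<Rightarrow> nat set \<Rightarrow> 'a vec set" where
  "subsp_sum n W S = {finsum_vec TYPE('a) n f S | f. \<forall>j\<in>S. f j \<in> W j}"

definition tridiagonal_system ::
  "nat \<Rightarrow> 'a::field mat \<Rightarrow> (nat \<Rightarrow> 'a mat) \<Rightarrow> 'a mat \<Rightarrow> (nat \<Rightarrow> 'a mat) \<Rightarrow> nat \<Rightarrow> bool" where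
  "tridiagonal_system n A E As Es d \<longleftrightarrow>
     A \<in> carrier_mat n n \<and> As \<in> carrier_mat n n
   \<and> diagonalizable A \<and> diagonalizable As
   \<and> is_prim_idem_ordering n A E d \<and> is_prim_idem_ordering n As Es d
   \<and> (\<forall>i\<le>d. \<forall>j\<le>d. (i > Suc j \<or> j > Suc i) \<longrightarrow> E i * As * E j = 0\<^sub>m n n)
   \<and> (\<forall>i\<le>d. \<forall>j\<le>d. (i > Suc j \<or> j > Suc i) \<longrightarrow> Es i * A * Es j = 0\<^sub>m n n)
   \<and> (\<forall>W. subspace_of n W \<and> invariant_under A W \<and> invariant_under As W
          \<longrightarrow> W = {0\<^sub>v n} \<or> W = carrier_vec n)"

definition split_decomp ::
  "nat \<Rightarrow> (nat \<Rightarrow> 'a::field mat) \<Rightarrow> (nat \<Rightarrow> 'a mat) \<Rightarrow> nat \<Rightarrow> nat \<Rightarrow> 'a vec set" where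
  "split_decomp n E Es d i =
     subsp_sum n (\<lambda>j. img n (Es j)) {0..i} \<inter> subsp_sum n (\<lambda>j. img n (E j)) {i..d}"

end

theory Submission
  imports Defs
begin



lemma sm0[simp]: "(c::'b::field) \<cdot>\<^sub>v 0\<^sub>v m = 0\<^sub>v m" by (intro eq_vecI) auto

lemma FS:
  assumes "finite F" "\<And>j. j \<in> F \<Longrightarrow> f j \<in> carrier_vec n"
  shows "finsum_vec TYPE('a::comm_monoid_add) n f F = vec n (\<lambda>i. \<Sum>j\<in>F. f j $ i)"
proof (rule eq_vecI)
  fix i assume "i < dim_vec (vec n (\<lambda>i. \<Sum>j\<in>F. f j $ i))"
  hence i: "i < n" by simp
  show "finsum_vec TYPE('a) n f F $ i = vec n (\<lambda>i. \<Sum>j\<in>F. f j $ i) $ i"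
    using index_finsum_vec[OF assms(1) i, of f] assms(2) i by auto
next
  have "finsum_vec TYPE('a) n f F \<in> carrier_vec n" using finsum_vec_closed[of f F n] assms(2) by auto
  thus "dim_vec (finsum_vec TYPE('a) n f F) = dim_vec (vec n (\<lambda>i. \<Sum>j\<in>F. f j $ i))" by simp
qed

lemma smat_mv: assumes "M \<in> carrier_mat n m" "v \<in> carrier_vec m"
  shows "(c \<cdot>\<^sub>m M) *\<^sub>v v = c \<cdot>\<^sub>v (M *\<^sub>v (v::'a::comm_ring_1 vec))"
  using assms by (intro eq_vecI) (auto simp: scalar_prod_def sum_distrib_left ac_simps)

lemma sub_carrier: "subspace_of n T \<Longrightarrow> v \<in> T \<Longrightarrow> v \<in> carrier_vec n"
  unfolding subspace_of_def by auto
lemma sub_zero: "subspace_of n T \<Longrightarrow> 0\<^sub>v n \<in> T"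
  unfolding subspace_of_def by auto
lemma sub_add: "subspace_of n T \<Longrightarrow> v \<in> T \<Longrightarrow> w \<in> T \<Longrightarrow> v + w \<in> T"
  unfolding subspace_of_def by auto
lemma sub_smult: "subspace_of n T \<Longrightarrow> v \<in> T \<Longrightarrow> c \<cdot>\<^sub>v v \<in> T"
  unfolding subspace_of_def by auto
lemma sub_minus: assumes "subspace_of n T" "v \<in> T" "w \<in> T" shows "v - (w :: 'a::field vec) \<in> T"
proof -
  have "v - w = v + (-1) \<cdot>\<^sub>v w" using sub_carrier[OF assms(1,2)] sub_carrier[OF assms(1,3)]
    by (intro eq_vecI) auto
  thus ?thesis using assms sub_add sub_smult by metis
qed

lemma sub_finsum:
  assumes T: "subspace_of n T" and "finite S" and "\<And>j. j \<in> S \<Longrightarrow> f j \<in> T"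
  shows "finsum_vec TYPE('a::field) n f S \<in> T"
  using assms(2,3)
proof (induction S rule: finite_induct)
  case empty thus ?case using finsum_vec_empty sub_zero[OF T] by metis
next
  case (insert x F)
  have c: "f \<in> F \<rightarrow> carrier_vec n" "f x \<in> carrier_vec n" using insert.prems sub_carrier[OF T] by auto
  show ?case unfolding finsum_vec_insert[OF insert(1,2) c]
    using insert sub_add[OF T] by auto
qed

lemma subsp_sum_sub:
  assumes T: "subspace_of n T" and "finite S" and "\<And>j. j \<in> S \<Longrightarrow> W j \<subseteq> T"
  shows "subsp_sum n W S \<subseteq> (T :: 'a::field vec set)"
  unfolding subsp_sum_def using sub_finsum[OF T assms(2)] assms(3) by blast

lemma subsp_sum_in:
  assumes "finite S" "j \<in> S" "w \<in> W j" "w \<in> carrier_vec n" "\<And>k. k \<in> S \<Longrightarrow> 0\<^sub>v n \<in> W k"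
  shows "w \<in> subsp_sum n W (S :: nat set)"
proof -
  let ?f = "\<lambda>k. if k = j then w else 0\<^sub>v n"
  have "finsum_vec TYPE('a) n ?f S = vec n (\<lambda>i. \<Sum>k\<in>S. ?f k $ i)"
    using assms by (intro FS) auto
  also have "\<dots> = w"
  proof (rule eq_vecI)
    fix i assume "i < dim_vec w"
    hence i: "i < n" using assms(4) by auto
    have "(\<Sum>k\<in>S. ?f k $ i) = (\<Sum>k\<in>S. if k = j then w $ i else 0)"
      by (rule sum.cong) (auto simp: i)
    also have "\<dots> = w $ i" using assms(1,2) by simp
    finally show "vec n (\<lambda>i. \<Sum>k\<in>S. ?f k $ i) $ i = w $ i" using i by simp
  qed (use assms(4) in auto)
  finally show ?thesis unfolding subsp_sum_def using assms by (intro CollectI exI[of _ ?f]) auto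
qed

lemma subsp_sum_subspace:
  assumes "finite S" "\<And>j. j \<in> S \<Longrightarrow> subspace_of n (W j)"
  shows "subspace_of n (subsp_sum n W S :: 'a::field vec set)"
proof -
  have cf: "finsum_vec TYPE('a) n f S = vec n (\<lambda>i. \<Sum>j\<in>S. f j $ i)" if "\<forall>j\<in>S. f j \<in> W j" for f
    using that assms by (intro FS) (auto intro: sub_carrier)
  show ?thesis unfolding subspace_of_def
  proof (intro conjI ballI allI)
    show "subsp_sum n W S \<subseteq> carrier_vec n"
      unfolding subsp_sum_def using cf by auto
    have z: "\<forall>j\<in>S. 0\<^sub>v n \<in> W j" using assms sub_zero by auto
    have "finsum_vec TYPE('a) n (\<lambda>_. 0\<^sub>v n) S = 0\<^sub>v n" unfolding cf[OF z]
      by (intro eq_vecI) auto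
    thus "0\<^sub>v n \<in> subsp_sum n W S" unfolding subsp_sum_def using assms sub_zero by (intro CollectI exI[of _ "\<lambda>_. 0\<^sub>v n"]) auto
  next
    fix v w assume "v \<in> subsp_sum n W S" "w \<in> subsp_sum n W S"
    then obtain f g where f: "v = finsum_vec TYPE('a) n f S" "\<forall>j\<in>S. f j \<in> W j"
      and g: "w = finsum_vec TYPE('a) n g S" "\<forall>j\<in>S. g j \<in> W j" unfolding subsp_sum_def by auto
    have h: "\<forall>j\<in>S. f j + g j \<in> W j" using f g assms sub_add by blast
    have fd: "dim_vec (f j) = n" "dim_vec (g j) = n" if "j \<in> S" for j
      using f(2) g(2) assms that sub_carrier carrier_vecD by metis+
    have "finsum_vec TYPE('a) n (\<lambda>j. f j + g j) S = v + w" unfolding cf[OF h] f(1) g(1) cf[OF f(2)] cf[OF g(2)]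
      by (intro eq_vecI) (auto simp: sum.distrib[symmetric] fd intro!: sum.cong)
    thus "v + w \<in> subsp_sum n W S" unfolding subsp_sum_def using h by (intro CollectI exI[of _ "\<lambda>j. f j + g j"]) auto
  next
    fix c v assume "v \<in> subsp_sum n W S"
    then obtain f where f: "v = finsum_vec TYPE('a) n f S" "\<forall>j\<in>S. f j \<in> W j" unfolding subsp_sum_def by auto
    have h: "\<forall>j\<in>S. c \<cdot>\<^sub>v f j \<in> W j" using f assms sub_smult by blast
    have fd: "dim_vec (f j) = n" if "j \<in> S" for j
      using f(2) assms that sub_carrier carrier_vecD by metis
    have "finsum_vec TYPE('a) n (\<lambda>j. c \<cdot>\<^sub>v f j) S = c \<cdot>\<^sub>v v" unfolding cf[OF h] f(1) cf[OF f(2)]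
      by (intro eq_vecI) (auto simp: sum_distrib_left fd intro!: sum.cong)
    thus "c \<cdot>\<^sub>v v \<in> subsp_sum n W S" unfolding subsp_sum_def using h by (intro CollectI exI[of _ "\<lambda>j. c \<cdot>\<^sub>v f j"]) auto
  qed
qed

lemma subsp_sum_empty: "subsp_sum n W {} = {0\<^sub>v n :: 'a::field vec}"
  unfolding subsp_sum_def using finsum_vec_empty by auto

lemma subsp_sum_cong: "(\<And>j. j \<in> S \<Longrightarrow> W j = W' j) \<Longrightarrow> subsp_sum n W S = subsp_sum n W' S"
  unfolding subsp_sum_def by auto

lemma subsp_sum_mono:
  assumes "S \<subseteq> S'" "finite S'" "\<And>j. j \<in> S' \<Longrightarrow> subspace_of n (W j)"
  shows "subsp_sum n W S \<subseteq> (subsp_sum n W S' :: 'a::field vec set)"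
proof (rule subsp_sum_sub)
  show "subspace_of n (subsp_sum n W S')" using assms by (intro subsp_sum_subspace)
  show "finite S" using assms finite_subset by auto
  fix j assume j: "j \<in> S"
  show "W j \<subseteq> subsp_sum n W S'"
    using assms j by (auto intro!: subsp_sum_in intro: sub_carrier sub_zero)
qed

definition linmap :: "nat \<Rightarrow> ('a::field vec \<Rightarrow> 'a vec) \<Rightarrow> bool" where
  "linmap n f \<longleftrightarrow> (\<forall>v\<in>carrier_vec n. f v \<in> carrier_vec n) \<and>
     (\<forall>v\<in>carrier_vec n. \<forall>w\<in>carrier_vec n. f (v + w) = f v + f w) \<and>
     (\<forall>c. \<forall>v\<in>carrier_vec n. f (c \<cdot>\<^sub>v v) = c \<cdot>\<^sub>v f v)"

lemma linmap_mat: assumes "X \<in> carrier_mat n n"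
  shows "linmap n (\<lambda>v. X *\<^sub>v v - c \<cdot>\<^sub>v v)"
  unfolding linmap_def using assms
  by (auto intro!: eq_vecI simp: mult_add_distrib_mat_vec mult_mat_vec algebra_simps)

lemma linmap_mat0: assumes "X \<in> carrier_mat n n"
  shows "linmap n (\<lambda>v. X *\<^sub>v v)"
  unfolding linmap_def using assms
  by (auto simp: mult_add_distrib_mat_vec mult_mat_vec)

lemma preimage_subspace:
  assumes f: "linmap n f" and T: "subspace_of n T"
  shows "subspace_of n {v \<in> carrier_vec n. f v \<in> T}"
proof -
  have z: "f (0\<^sub>v n) = 0\<^sub>v n"
  proof -
    have l3: "\<forall>c. \<forall>v\<in>carrier_vec n. f (c \<cdot>\<^sub>v v) = c \<cdot>\<^sub>v f v" using f unfolding linmap_def by auto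
    have "f (0\<^sub>v n) = f ((0::'a) \<cdot>\<^sub>v 0\<^sub>v n)" by simp
    also have "\<dots> = 0 \<cdot>\<^sub>v f (0\<^sub>v n)" using l3 zero_carrier_vec by blast
    also have "\<dots> = 0\<^sub>v n"
    proof -
      have "f (0\<^sub>v n) \<in> carrier_vec n" using f unfolding linmap_def by auto
      thus ?thesis by (intro eq_vecI) auto
    qed
    finally show ?thesis .
  qed
  show ?thesis unfolding subspace_of_def using f T z sub_zero[OF T] unfolding linmap_def
    by (auto intro: sub_add[OF T] sub_smult[OF T])
qed

lemma linmap_subsp_sum:
  assumes f: "linmap n f" and T: "subspace_of n T" and S: "finite S"
    and W: "\<And>j. j \<in> S \<Longrightarrow> W j \<subseteq> carrier_vec n"
    and h: "\<And>j w. j \<in> S \<Longrightarrow> w \<in> W j \<Longrightarrow> f w \<in> T"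
    and v: "v \<in> subsp_sum n W S"
  shows "f v \<in> (T :: 'a::field vec set)"
proof -
  have "subsp_sum n W S \<subseteq> {v \<in> carrier_vec n. f v \<in> T}"
    using W h by (intro subsp_sum_sub[OF preimage_subspace[OF f T] S]) auto
  thus ?thesis using v by auto
qed

lemma eigenspace_subspace: assumes "X \<in> carrier_mat n n"
  shows "subspace_of n (eigenspace n X c)"
  unfolding subspace_of_def eigenspace_def using assms
  by (auto intro!: eq_vecI simp: mult_add_distrib_mat_vec mult_mat_vec algebra_simps)




lemma mz: "A \<in> carrier_mat n n \<Longrightarrow> A *\<^sub>v 0\<^sub>v n = (0\<^sub>v n :: 'a::comm_ring_1 vec)"
  by (intro eq_vecI) (auto simp: row_def)

lemma foldr_carrier: assumes "X \<in> carrier_mat n n"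
  shows "foldr (\<lambda>j M. (inverse (th i - th j) \<cdot>\<^sub>m (X - th j \<cdot>\<^sub>m 1\<^sub>m n)) * M) xs (1\<^sub>m n) \<in> carrier_mat n (n::nat)"
  using assms by (induction xs) auto

lemma foldr_eig: assumes X: "X \<in> carrier_mat n n" and p: "p \<in> carrier_vec n" and ev: "X *\<^sub>v p = lam \<cdot>\<^sub>v p"
  shows "foldr (\<lambda>j M. (inverse (th i - th j) \<cdot>\<^sub>m (X - th j \<cdot>\<^sub>m 1\<^sub>m n)) * M) xs (1\<^sub>m n) *\<^sub>v p
     = prod_list (map (\<lambda>j. inverse (th i - th j) * (lam - th j)) xs) \<cdot>\<^sub>v (p :: 'a::field vec)"
proof (induction xs)
  case Nil thus ?case using p by simp
next
  case (Cons j xs)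
  let ?M = "foldr (\<lambda>j M. (inverse (th i - th j) \<cdot>\<^sub>m (X - th j \<cdot>\<^sub>m 1\<^sub>m n)) * M) xs (1\<^sub>m n)"
  let ?c = "prod_list (map (\<lambda>j. inverse (th i - th j) * (lam - th j)) xs)"
  have M: "?M \<in> carrier_mat n n" by (rule foldr_carrier[OF X])
  have F: "foldr (\<lambda>j M. (inverse (th i - th j) \<cdot>\<^sub>m (X - th j \<cdot>\<^sub>m 1\<^sub>m n)) * M) (j # xs) (1\<^sub>m n)
     = (inverse (th i - th j) \<cdot>\<^sub>m (X - th j \<cdot>\<^sub>m 1\<^sub>m n)) * ?M" by simp
  have C: "inverse (th i - th j) \<cdot>\<^sub>m (X - th j \<cdot>\<^sub>m 1\<^sub>m n) \<in> carrier_mat n n" using X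
    by (intro smult_carrier_mat minus_carrier_mat) auto
  have "foldr (\<lambda>j M. (inverse (th i - th j) \<cdot>\<^sub>m (X - th j \<cdot>\<^sub>m 1\<^sub>m n)) * M) (j # xs) (1\<^sub>m n) *\<^sub>v p
     = (inverse (th i - th j) \<cdot>\<^sub>m (X - th j \<cdot>\<^sub>m 1\<^sub>m n)) *\<^sub>v (?M *\<^sub>v p)"
    unfolding F by (rule assoc_mult_mat_vec[OF C M p])
  also have "\<dots> = (inverse (th i - th j) \<cdot>\<^sub>m (X - th j \<cdot>\<^sub>m 1\<^sub>m n)) *\<^sub>v (?c \<cdot>\<^sub>v p)" using Cons by simp
  also have "\<dots> = inverse (th i - th j) \<cdot>\<^sub>v (X *\<^sub>v (?c \<cdot>\<^sub>v p) - th j \<cdot>\<^sub>v (?c \<cdot>\<^sub>v p))"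
  proof -
    have w: "?c \<cdot>\<^sub>v p \<in> carrier_vec n" using p by simp
    have XC: "X - th j \<cdot>\<^sub>m 1\<^sub>m n \<in> carrier_mat n n" using X by (intro minus_carrier_mat) auto
    have "(inverse (th i - th j) \<cdot>\<^sub>m (X - th j \<cdot>\<^sub>m 1\<^sub>m n)) *\<^sub>v (?c \<cdot>\<^sub>v p)
       = inverse (th i - th j) \<cdot>\<^sub>v ((X - th j \<cdot>\<^sub>m 1\<^sub>m n) *\<^sub>v (?c \<cdot>\<^sub>v p))"
      by (rule smat_mv[OF XC w])
    also have "(X - th j \<cdot>\<^sub>m 1\<^sub>m n) *\<^sub>v (?c \<cdot>\<^sub>v p) = X *\<^sub>v (?c \<cdot>\<^sub>v p) - (th j \<cdot>\<^sub>m 1\<^sub>m n) *\<^sub>v (?c \<cdot>\<^sub>v p)"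
      using X w by (intro minus_mult_distrib_mat_vec) auto
    also have "(th j \<cdot>\<^sub>m 1\<^sub>m n) *\<^sub>v (?c \<cdot>\<^sub>v p) = th j \<cdot>\<^sub>v (1\<^sub>m n *\<^sub>v (?c \<cdot>\<^sub>v p))"
      using w by (intro smat_mv) auto
    also have "1\<^sub>m n *\<^sub>v (?c \<cdot>\<^sub>v p) = ?c \<cdot>\<^sub>v p" using w by simp
    finally show ?thesis .
  qed
  also have "\<dots> = (inverse (th i - th j) * (lam - th j) * ?c) \<cdot>\<^sub>v p"
    using X p ev by (intro eq_vecI) (auto simp: mult_mat_vec algebra_simps)
  finally show ?case by (simp add: ac_simps)
qed

lemma prim_idem_carrier: "X \<in> carrier_mat n n \<Longrightarrow> prim_idem n X th d i \<in> carrier_mat n n"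
  unfolding prim_idem_def by (rule foldr_carrier)

lemma prim_idem_eig: assumes "X \<in> carrier_mat n n" "p \<in> carrier_vec n" "X *\<^sub>v p = lam \<cdot>\<^sub>v p"
  shows "prim_idem n X th d i *\<^sub>v p = prod_list (map (\<lambda>j. inverse (th i - th j) * (lam - th j)) (filter (\<lambda>j. j \<noteq> i) [0..<Suc d])) \<cdot>\<^sub>v (p :: 'a::field vec)"
  unfolding prim_idem_def by (rule foldr_eig[OF assms])

lemma prod_list_one: "(\<And>x. x \<in> set xs \<Longrightarrow> f x = 1) \<Longrightarrow> prod_list (map f xs) = (1::'a::comm_monoid_mult)"
  by (induction xs) auto

lemma coeff_delta:
  assumes inj: "inj_on th {0..d}" and m: "m \<le> d" and k: "k \<le> d"
  shows "prod_list (map (\<lambda>j. inverse (th k - th j) * (th m - th j)) (filter (\<lambda>j. j \<noteq> k) [0..<Suc d]))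
     = (if k = m then 1 else (0::'a::field))"
proof (cases "k = m")
  case True
  have "prod_list (map (\<lambda>j. inverse (th k - th j) * (th m - th j)) (filter (\<lambda>j. j \<noteq> k) [0..<Suc d])) = 1"
  proof (rule prod_list_one)
    fix j assume "j \<in> set (filter (\<lambda>j. j \<noteq> k) [0..<Suc d])"
    hence "j \<noteq> k" "j \<le> d" by (auto simp del: upt_Suc)
    hence "th k \<noteq> th j" using inj k unfolding inj_on_def by fastforce
    thus "inverse (th k - th j) * (th m - th j) = 1" using True by simp
  qed
  thus ?thesis using True by simp
next
  case False
  have "m \<in> set (filter (\<lambda>j. j \<noteq> k) [0..<Suc d])" using False m by (auto simp del: upt_Suc)
  hence "0 \<in> set (map (\<lambda>j. inverse (th k - th j) * (th m - th j)) (filter (\<lambda>j. j \<noteq> k) [0..<Suc d]))"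
    by force
  thus ?thesis using False by (simp add: prod_list_zero_iff)
qed

lemma linmap_finsum: assumes "finite S" "\<And>k. k \<in> S \<Longrightarrow> E k \<in> carrier_mat n n"
  shows "linmap n (\<lambda>v. finsum_vec TYPE('a::field) n (\<lambda>k. E k *\<^sub>v v) S - v)"
proof -
  have cf: "finsum_vec TYPE('a) n (\<lambda>k. E k *\<^sub>v v) S = vec n (\<lambda>i. \<Sum>k\<in>S. (E k *\<^sub>v v) $ i)" if "v \<in> carrier_vec n" for v
    using assms that by (intro FS) (auto intro: mult_mat_vec_carrier)
  show ?thesis unfolding linmap_def
  proof (intro conjI ballI allI)
    fix v :: "'a vec" assume v: "v \<in> carrier_vec n"
    show "finsum_vec TYPE('a) n (\<lambda>k. E k *\<^sub>v v) S - v \<in> carrier_vec n" unfolding cf[OF v] using v by simp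
  next
    fix v w :: "'a vec" assume v: "v \<in> carrier_vec n" and w: "w \<in> carrier_vec n"
    show "finsum_vec TYPE('a) n (\<lambda>k. E k *\<^sub>v (v + w)) S - (v + w) =
         finsum_vec TYPE('a) n (\<lambda>k. E k *\<^sub>v v) S - v + (finsum_vec TYPE('a) n (\<lambda>k. E k *\<^sub>v w) S - w)"
    proof -
      have pw: "(E k *\<^sub>v (v + w)) $ i = (E k *\<^sub>v v) $ i + (E k *\<^sub>v w) $ i" if "k \<in> S" "i < n" for k i
        using assms(2)[OF that(1)] v w that(2) by (simp add: mult_add_distrib_mat_vec)
      show ?thesis unfolding cf[OF v] cf[OF w] cf[OF add_carrier_vec[OF v w]] using v w
        by (intro eq_vecI) (auto simp: pw sum.distrib)
    qed
  next
    fix c :: 'a and v :: "'a vec" assume v: "v \<in> carrier_vec n"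
    show "finsum_vec TYPE('a) n (\<lambda>k. E k *\<^sub>v (c \<cdot>\<^sub>v v)) S - c \<cdot>\<^sub>v v =
         c \<cdot>\<^sub>v (finsum_vec TYPE('a) n (\<lambda>k. E k *\<^sub>v v) S - v)"
    proof -
      have pw: "(E k *\<^sub>v (c \<cdot>\<^sub>v v)) $ i = c * (E k *\<^sub>v v) $ i" if "k \<in> S" "i < n" for k i
        using assms(2)[OF that(1)] v that(2) by (simp add: mult_mat_vec)
      show ?thesis unfolding cf[OF v] cf[OF smult_carrier_vec[THEN iffD2, OF v]] using v
        by (intro eq_vecI) (auto simp: pw sum_distrib_left algebra_simps)
    qed
  qed
qed

lemma zero_subspace: "subspace_of n {0\<^sub>v n :: 'a::field vec}"
  unfolding subspace_of_def by auto

lemma diag_span: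
  assumes X: "X \<in> carrier_mat n n" and dg: "diagonalizable X" and T: "subspace_of n T"
    and h: "\<And>p lam. p \<in> carrier_vec n \<Longrightarrow> X *\<^sub>v p = lam \<cdot>\<^sub>v p \<Longrightarrow> p \<in> T"
    and v: "v \<in> carrier_vec n"
  shows "v \<in> (T :: 'a::field vec set)"
proof -
  obtain D P Q where w: "similar_mat_wit X D P Q" and D: "diagonal_mat D"
    using dg unfolding diagonalizable_def similar_mat_def by auto
  have dX: "dim_row X = n" using X by auto
  have PC: "P \<in> carrier_mat n n" "Q \<in> carrier_mat n n" "D \<in> carrier_mat n n" and PQ: "P * Q = 1\<^sub>m n" "Q * P = 1\<^sub>m n"
    and XD: "X = P * D * Q"
    using w unfolding similar_mat_wit_def Let_def dX by auto
  have col_ev: "X *\<^sub>v (P *\<^sub>v unit_vec n j) = D $$ (j, j) \<cdot>\<^sub>v (P *\<^sub>v unit_vec n j)" if j: "j < n" for j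
  proof -
    have "X *\<^sub>v (P *\<^sub>v unit_vec n j) = P *\<^sub>v (D *\<^sub>v ((Q * P) *\<^sub>v unit_vec n j))"
    proof -
      have w: "P *\<^sub>v unit_vec n j \<in> carrier_vec n" using PC by simp
      have PD: "P * D \<in> carrier_mat n n" using PC by simp
      have "X *\<^sub>v (P *\<^sub>v unit_vec n j) = (P * D) *\<^sub>v (Q *\<^sub>v (P *\<^sub>v unit_vec n j))"
        unfolding XD by (rule assoc_mult_mat_vec[OF PD PC(2) w])
      also have "\<dots> = P *\<^sub>v (D *\<^sub>v (Q *\<^sub>v (P *\<^sub>v unit_vec n j)))"
        using PC w by (intro assoc_mult_mat_vec) auto
      also have "Q *\<^sub>v (P *\<^sub>v unit_vec n j) = (Q * P) *\<^sub>v unit_vec n j"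
        using PC by (intro assoc_mult_mat_vec[symmetric]) auto
      finally show ?thesis .
    qed
    also have "(Q * P) *\<^sub>v unit_vec n j = unit_vec n j" unfolding PQ by simp
    also have "D *\<^sub>v unit_vec n j = D $$ (j, j) \<cdot>\<^sub>v unit_vec n j"
    proof (rule eq_vecI)
      fix i assume "i < dim_vec (D $$ (j, j) \<cdot>\<^sub>v unit_vec n j)"
      hence i: "i < n" by simp
      have "(D *\<^sub>v unit_vec n j) $ i = D $$ (i, j)" using i j PC by (simp add: row_def)
      thus "(D *\<^sub>v unit_vec n j) $ i = (D $$ (j, j) \<cdot>\<^sub>v unit_vec n j) $ i"
        using D i j PC unfolding diagonal_mat_def by (cases "i = j") auto
    qed (use PC in simp)
    also have "P *\<^sub>v (D $$ (j, j) \<cdot>\<^sub>v unit_vec n j) = D $$ (j, j) \<cdot>\<^sub>v (P *\<^sub>v unit_vec n j)"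
      using PC by (simp add: mult_mat_vec)
    finally show ?thesis .
  qed
  have inT: "P *\<^sub>v unit_vec n j \<in> T" if "j < n" for j
    using h[OF _ col_ev[OF that]] PC by simp
  define u where "u = Q *\<^sub>v v"
  have uc: "u \<in> carrier_vec n" unfolding u_def using PC v by simp
  have pe: "(P *\<^sub>v unit_vec n j) $ i = P $$ (i, j)" if "i < n" "j < n" for i j using PC that by simp
  have pu: "row P i \<bullet> u = (\<Sum>j\<in>{0..<n}. P $$ (i, j) * u $ j)" if "i < n" for i
    using PC uc that by (simp add: scalar_prod_def)
  have "P *\<^sub>v u = finsum_vec TYPE('a) n (\<lambda>j. u $ j \<cdot>\<^sub>v (P *\<^sub>v unit_vec n j)) {0..<n}"
  proof -
    have "finsum_vec TYPE('a) n (\<lambda>j. u $ j \<cdot>\<^sub>v (P *\<^sub>v unit_vec n j)) {0..<n}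
       = vec n (\<lambda>i. \<Sum>j\<in>{0..<n}. (u $ j \<cdot>\<^sub>v (P *\<^sub>v unit_vec n j)) $ i)"
      using PC by (intro FS) auto
    also have "\<dots> = P *\<^sub>v u"
      using PC uc by (intro eq_vecI) (auto simp: pu pe ac_simps intro!: sum.cong)
    finally show ?thesis by simp
  qed
  also have "\<dots> \<in> T" by (rule sub_finsum[OF T]) (auto intro: inT sub_smult[OF T])
  finally have "P *\<^sub>v (Q *\<^sub>v v) \<in> T" unfolding u_def .
  moreover have "P *\<^sub>v (Q *\<^sub>v v) = v" using PC v PQ by (simp add: assoc_mult_mat_vec[symmetric])
  ultimately show ?thesis by simp
qed

lemma sum_idem:
  assumes X: "X \<in> carrier_mat n n" and dg: "diagonalizable X" and po: "is_prim_idem_ordering n X E d"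
    and v: "v \<in> carrier_vec n"
  shows "finsum_vec TYPE('a::field) n (\<lambda>k. E k *\<^sub>v v) {0..d} = v"
proof -
  obtain th where inj: "inj_on th {0..d}" and ev: "{k. eigenvalue X k} = th ` {0..d}"
    and Ed: "\<And>i. i \<le> d \<Longrightarrow> E i = prim_idem n X th d i"
    using po unfolding is_prim_idem_ordering_def by auto
  have EC: "E k \<in> carrier_mat n n" if "k \<in> {0..d}" for k using Ed[of k] that prim_idem_carrier[OF X] by auto
  let ?f = "\<lambda>v. finsum_vec TYPE('a) n (\<lambda>k. E k *\<^sub>v v) {0..d} - v"
  have lin: "linmap n ?f" by (rule linmap_finsum) (use EC in auto)
  have sp: "subspace_of n {v \<in> carrier_vec n. ?f v \<in> {0\<^sub>v n}}" by (rule preimage_subspace[OF lin zero_subspace])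
  have "v \<in> {v \<in> carrier_vec n. ?f v \<in> {0\<^sub>v n}}"
  proof (rule diag_span[OF X dg sp _ v])
    fix p lam assume p: "p \<in> carrier_vec n" and pe: "X *\<^sub>v p = lam \<cdot>\<^sub>v p"
    have "finsum_vec TYPE('a) n (\<lambda>k. E k *\<^sub>v p) {0..d} = p"
    proof (cases "p = 0\<^sub>v n")
      case True
      have "finsum_vec TYPE('a) n (\<lambda>k. E k *\<^sub>v p) {0..d} = vec n (\<lambda>i. \<Sum>k\<in>{0..d}. (E k *\<^sub>v p) $ i)"
        using EC p by (intro FS) (auto intro: mult_mat_vec_carrier)
      also have "\<dots> = p" using True EC by (intro eq_vecI) (auto simp: mz)
      finally show ?thesis .
    next
      case False
      have "eigenvalue X lam" unfolding eigenvalue_def eigenvector_def using p pe False X by auto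
      hence "lam \<in> th ` {0..d}" using ev by blast
      then obtain m where m: "m \<le> d" "lam = th m" by auto
      have Ek: "E k *\<^sub>v p = (if k = m then 1 else 0) \<cdot>\<^sub>v p" if "k \<in> {0..d}" for k
        using Ed[of k] that prim_idem_eig[OF X p pe, of th d k] coeff_delta[OF inj m(1), of k] m(2) by auto
      have "finsum_vec TYPE('a) n (\<lambda>k. E k *\<^sub>v p) {0..d} = vec n (\<lambda>i. \<Sum>k\<in>{0..d}. (E k *\<^sub>v p) $ i)"
        using EC p by (intro FS) (auto intro: mult_mat_vec_carrier)
      also have "\<dots> = vec n (\<lambda>i. \<Sum>k\<in>{0..d}. (if k = m then p $ i else 0))"
      proof -
        have ifm: "(if b then (1::'a) else 0) * x = (if b then x else 0)" for b x by simp
        show ?thesis using p by (intro eq_vecI) (auto simp: Ek ifm intro!: sum.cong)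
      qed
      also have "\<dots> = p"
      proof (rule eq_vecI)
        fix i assume i: "i < dim_vec p"
        have "(\<Sum>k\<in>{0..d}. (if k = m then p $ i else 0)) = p $ i" using m by (simp add: sum.delta)
        thus "vec n (\<lambda>i. \<Sum>k\<in>{0..d}. (if k = m then p $ i else 0)) $ i = p $ i" using i p by simp
      qed (use p in simp)
      finally show ?thesis .
    qed
    thus "p \<in> {v \<in> carrier_vec n. ?f v \<in> {0\<^sub>v n}}" using p by simp
  qed
  hence fz: "?f v = 0\<^sub>v n" by simp
  have Fc: "finsum_vec TYPE('a) n (\<lambda>k. E k *\<^sub>v v) {0..d} \<in> carrier_vec n"
    by (rule finsum_vec_closed) (auto intro: mult_mat_vec_carrier[OF EC v])
  show ?thesis
  proof (rule eq_vecI)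
    fix i assume "i < dim_vec v" hence i: "i < n" using v by simp
    have "(finsum_vec TYPE('a) n (\<lambda>k. E k *\<^sub>v v) {0..d} - v) $ i = 0" using fz i by simp
    thus "finsum_vec TYPE('a) n (\<lambda>k. E k *\<^sub>v v) {0..d} $ i = v $ i" using Fc v i by simp
  qed (use Fc v in simp)
qed




lemma tri_step:
  assumes EC: "\<And>k. k \<le> d \<Longrightarrow> E k \<in> carrier_mat n n"
    and sumE: "\<And>v. v \<in> carrier_vec n \<Longrightarrow> finsum_vec TYPE('a::field) n (\<lambda>k. E k *\<^sub>v v) {0..d} = v"
    and X: "X \<in> carrier_mat n n"
    and tri: "\<forall>i\<le>d. \<forall>j\<le>d. (i > Suc j \<or> j > Suc i) \<longrightarrow> E i * X * E j = 0\<^sub>m n n"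
    and j: "j \<le> d" and w: "w \<in> img n (E j)"
  shows "X *\<^sub>v w \<in> subsp_sum n (\<lambda>k. img n (E k)) ({0..d} \<inter> {j-1..j+1})"
proof -
  obtain w' where w': "w' \<in> carrier_vec n" "w = E j *\<^sub>v w'" using w unfolding img_def by auto
  let ?y = "X *\<^sub>v w"
  let ?R = "{0..d} \<inter> {j-1..j+1}"
  have yc: "?y \<in> carrier_vec n" using X EC[OF j] w' by simp
  have zero: "E k *\<^sub>v ?y = 0\<^sub>v n" if "k \<in> {0..d} - ?R" for k
  proof -
    have k: "k \<le> d" "k > Suc j \<or> j > Suc k" using that by auto
    have "(E k * X * E j) *\<^sub>v w' = (E k * X) *\<^sub>v (E j *\<^sub>v w')"
      using EC[OF k(1)] EC[OF j] X w' by (intro assoc_mult_mat_vec) auto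
    also have "\<dots> = E k *\<^sub>v (X *\<^sub>v (E j *\<^sub>v w'))"
      using EC[OF k(1)] EC[OF j] X w' by (intro assoc_mult_mat_vec) auto
    finally have "E k *\<^sub>v ?y = (E k * X * E j) *\<^sub>v w'" using w' by simp
    also have "E k * X * E j = 0\<^sub>m n n" using tri k j by auto
    finally show ?thesis using w' by (simp) (intro eq_vecI, auto simp: row_def scalar_prod_def)
  qed
  have "?y = finsum_vec TYPE('a) n (\<lambda>k. E k *\<^sub>v ?y) {0..d}" using sumE[OF yc] by simp
  also have "\<dots> = vec n (\<lambda>i. \<Sum>k\<in>{0..d}. (E k *\<^sub>v ?y) $ i)"
    using EC yc by (intro FS) (auto intro: mult_mat_vec_carrier)
  also have "\<dots> = vec n (\<lambda>i. \<Sum>k\<in>?R. (E k *\<^sub>v ?y) $ i)"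
  proof (rule eq_vecI)
    fix i assume "i < dim_vec (vec n (\<lambda>i. \<Sum>k\<in>?R. (E k *\<^sub>v ?y) $ i))"
    hence i: "i < n" by simp
    have "(\<Sum>k\<in>{0..d}. (E k *\<^sub>v ?y) $ i) = (\<Sum>k\<in>?R. (E k *\<^sub>v ?y) $ i)"
      by (rule sum.mono_neutral_right) (auto simp: zero i)
    thus "vec n (\<lambda>i. \<Sum>k\<in>{0..d}. (E k *\<^sub>v ?y) $ i) $ i = vec n (\<lambda>i. \<Sum>k\<in>?R. (E k *\<^sub>v ?y) $ i) $ i"
      using i by simp
  qed simp
  also have "\<dots> = finsum_vec TYPE('a) n (\<lambda>k. E k *\<^sub>v ?y) ?R"
    using EC yc by (intro FS[symmetric]) (auto intro: mult_mat_vec_carrier)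
  finally have "?y = finsum_vec TYPE('a) n (\<lambda>k. E k *\<^sub>v ?y) ?R" .
  moreover have "\<forall>k\<in>?R. E k *\<^sub>v ?y \<in> img n (E k)" unfolding img_def using yc by auto
  ultimately show ?thesis unfolding subsp_sum_def by blast
qed

lemma eig_shift:
  assumes X: "X \<in> carrier_mat n n" and S: "finite S"
    and v: "v \<in> subsp_sum n (\<lambda>j. eigenspace n X (lam j)) S"
  shows "X *\<^sub>v v - lam j0 \<cdot>\<^sub>v v \<in> subsp_sum n (\<lambda>j. eigenspace n X (lam j)) (S - {j0})"
proof (rule linmap_subsp_sum[OF linmap_mat[OF X] _ S _ _ v])
  show T: "subspace_of n (subsp_sum n (\<lambda>j. eigenspace n X (lam j)) (S - {j0}))"
    using S by (intro subsp_sum_subspace eigenspace_subspace[OF X]) auto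
  show "\<And>j. j \<in> S \<Longrightarrow> eigenspace n X (lam j) \<subseteq> carrier_vec n" unfolding eigenspace_def by auto
  fix j w assume j: "j \<in> S" and w: "w \<in> eigenspace n X (lam j)"
  have wc: "w \<in> carrier_vec n" and Xw: "X *\<^sub>v w = lam j \<cdot>\<^sub>v w" using w unfolding eigenspace_def by auto
  have eq: "X *\<^sub>v w - lam j0 \<cdot>\<^sub>v w = (lam j - lam j0) \<cdot>\<^sub>v w" unfolding Xw using wc
    by (intro eq_vecI) (auto simp: algebra_simps)
  show "X *\<^sub>v w - lam j0 \<cdot>\<^sub>v w \<in> subsp_sum n (\<lambda>j. eigenspace n X (lam j)) (S - {j0})"
  proof (cases "j = j0")
    case True
    have "X *\<^sub>v w - lam j0 \<cdot>\<^sub>v w = 0\<^sub>v n" unfolding eq True using wc by (intro eq_vecI) auto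
    thus ?thesis using sub_zero[OF T] by simp
  next
    case False
    have "(lam j - lam j0) \<cdot>\<^sub>v w \<in> eigenspace n X (lam j)"
      by (rule sub_smult[OF eigenspace_subspace[OF X] w])
    thus ?thesis unfolding eq using S j False wc
      by (intro subsp_sum_in) (auto intro: sub_zero[OF eigenspace_subspace[OF X]] simp: eigenspace_def mz[OF X])
  qed
qed

lemma linmap_comp: "linmap n f \<Longrightarrow> linmap n g \<Longrightarrow> linmap n (\<lambda>v. f (g v))"
  unfolding linmap_def by auto

lemma linmap_add: fixes f g :: "'a::field vec \<Rightarrow> 'a vec" assumes f: "linmap n f" and g: "linmap n g" shows "linmap n (\<lambda>v. f v + g v)"
proof -
  have fc: "\<And>v. v \<in> carrier_vec n \<Longrightarrow> f v \<in> carrier_vec n" and gc: "\<And>v. v \<in> carrier_vec n \<Longrightarrow> g v \<in> carrier_vec n"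
    and fa: "\<And>v w. v \<in> carrier_vec n \<Longrightarrow> w \<in> carrier_vec n \<Longrightarrow> f (v + w) = f v + f w"
    and ga: "\<And>v w. v \<in> carrier_vec n \<Longrightarrow> w \<in> carrier_vec n \<Longrightarrow> g (v + w) = g v + g w"
    and fs: "\<And>c v. v \<in> carrier_vec n \<Longrightarrow> f (c \<cdot>\<^sub>v v) = c \<cdot>\<^sub>v f v"
    and gs: "\<And>c v. v \<in> carrier_vec n \<Longrightarrow> g (c \<cdot>\<^sub>v v) = c \<cdot>\<^sub>v g v"
    using f g unfolding linmap_def by auto
  show ?thesis unfolding linmap_def
  proof (intro conjI ballI allI)
    fix v w :: "'a vec" assume v: "v \<in> carrier_vec n" and w: "w \<in> carrier_vec n"
    show "f (v + w) + g (v + w) = f v + g v + (f w + g w)" unfolding fa[OF v w] ga[OF v w]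
      using fc[OF v] fc[OF w] gc[OF v] gc[OF w] by (intro eq_vecI) auto
  next
    fix c :: 'a and v :: "'a vec" assume v: "v \<in> carrier_vec n"
    show "f (c \<cdot>\<^sub>v v) + g (c \<cdot>\<^sub>v v) = c \<cdot>\<^sub>v (f v + g v)" unfolding fs[OF v] gs[OF v]
      using fc[OF v] gc[OF v] by (intro eq_vecI) (auto simp: algebra_simps)
  qed (use fc gc in auto)
qed

lemma linmap_diff: fixes f g :: "'a::field vec \<Rightarrow> 'a vec" assumes f: "linmap n f" and g: "linmap n g" shows "linmap n (\<lambda>v. f v - g v)"
proof -
  have fc: "\<And>v. v \<in> carrier_vec n \<Longrightarrow> f v \<in> carrier_vec n" and gc: "\<And>v. v \<in> carrier_vec n \<Longrightarrow> g v \<in> carrier_vec n"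
    and fa: "\<And>v w. v \<in> carrier_vec n \<Longrightarrow> w \<in> carrier_vec n \<Longrightarrow> f (v + w) = f v + f w"
    and ga: "\<And>v w. v \<in> carrier_vec n \<Longrightarrow> w \<in> carrier_vec n \<Longrightarrow> g (v + w) = g v + g w"
    and fs: "\<And>c v. v \<in> carrier_vec n \<Longrightarrow> f (c \<cdot>\<^sub>v v) = c \<cdot>\<^sub>v f v"
    and gs: "\<And>c v. v \<in> carrier_vec n \<Longrightarrow> g (c \<cdot>\<^sub>v v) = c \<cdot>\<^sub>v g v"
    using f g unfolding linmap_def by auto
  show ?thesis unfolding linmap_def
  proof (intro conjI ballI allI)
    fix v w :: "'a vec" assume v: "v \<in> carrier_vec n" and w: "w \<in> carrier_vec n"
    show "f (v + w) - g (v + w) = f v - g v + (f w - g w)" unfolding fa[OF v w] ga[OF v w]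
      using fc[OF v] fc[OF w] gc[OF v] gc[OF w] by (intro eq_vecI) auto
  next
    fix c :: 'a and v :: "'a vec" assume v: "v \<in> carrier_vec n"
    show "f (c \<cdot>\<^sub>v v) - g (c \<cdot>\<^sub>v v) = c \<cdot>\<^sub>v (f v - g v)" unfolding fs[OF v] gs[OF v]
      using fc[OF v] gc[OF v] by (intro eq_vecI) (auto simp: algebra_simps)
  qed (use fc gc in auto)
qed

lemma linmap_sm: fixes f :: "'a::field vec \<Rightarrow> 'a vec" assumes f: "linmap n f" shows "linmap n (\<lambda>v. c \<cdot>\<^sub>v f v)"
proof -
  have fc: "\<And>v. v \<in> carrier_vec n \<Longrightarrow> f v \<in> carrier_vec n"
    and fa: "\<And>v w. v \<in> carrier_vec n \<Longrightarrow> w \<in> carrier_vec n \<Longrightarrow> f (v + w) = f v + f w"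
    and fs: "\<And>c v. v \<in> carrier_vec n \<Longrightarrow> f (c \<cdot>\<^sub>v v) = c \<cdot>\<^sub>v f v"
    using f unfolding linmap_def by auto
  show ?thesis unfolding linmap_def
  proof (intro conjI ballI allI)
    fix v w :: "'a vec" assume v: "v \<in> carrier_vec n" and w: "w \<in> carrier_vec n"
    show "c \<cdot>\<^sub>v f (v + w) = c \<cdot>\<^sub>v f v + c \<cdot>\<^sub>v f w" unfolding fa[OF v w]
      using fc[OF v] fc[OF w] by (intro eq_vecI) (auto simp: algebra_simps)
  next
    fix c' :: 'a and v :: "'a vec" assume v: "v \<in> carrier_vec n"
    show "c \<cdot>\<^sub>v f (c' \<cdot>\<^sub>v v) = c' \<cdot>\<^sub>v (c \<cdot>\<^sub>v f v)" unfolding fs[OF v]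
      using fc[OF v] by (intro eq_vecI) (auto simp: algebra_simps)
  qed (use fc in auto)
qed

lemma linmap_id: "linmap n (\<lambda>v. v)" unfolding linmap_def by auto

lemma sub_inter: "subspace_of n A \<Longrightarrow> subspace_of n B \<Longrightarrow> subspace_of n (A \<inter> B)"
  unfolding subspace_of_def by auto

lemma powi_prod: assumes "(q::'a::field) \<noteq> 0"
  shows "q powi (2 * int i - int d) * q powi (int d - 2 * int i) = 1"
  using assms by (simp add: power_int_add[symmetric])

lemma powi_pred: assumes "(q::'a::field) \<noteq> 0" "i \<ge> 1"
  shows "q powi (int d - 2 * int (i - 1)) = q^2 * q powi (int d - 2 * int i)"
proof -
  have e: "int d - 2 * int (i - 1) = 2 + (int d - 2 * int i)" using assms(2) by simp
  have "q powi (int d - 2 * int (i - 1)) = q powi (2 + (int d - 2 * int i))" by (simp only: e)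
  also have "\<dots> = q powi 2 * q powi (int d - 2 * int i)" by (rule power_int_add) (simp add: assms(1))
  finally show ?thesis by simp
qed

lemma powi_succ: assumes "(q::'a::field) \<noteq> 0"
  shows "q powi (int d - 2 * int (Suc i)) = inverse (q^2) * q powi (int d - 2 * int i)"
proof -
  have e: "int d - 2 * int (Suc i) = -2 + (int d - 2 * int i)" by simp
  have "q powi (int d - 2 * int (Suc i)) = q powi (-2 + (int d - 2 * int i))" by (simp only: e)
  also have "\<dots> = q powi (-2) * q powi (int d - 2 * int i)" by (rule power_int_add) (simp add: assms(1))
  finally show ?thesis by (simp add: power_int_minus)
qed

lemma powi_nz: "(q::'a::field) \<noteq> 0 \<Longrightarrow> q powi k \<noteq> 0" by simp




lemma split_main:
  fixes n d :: nat and q :: "'a::field" and A As K :: "'a mat" and E Es :: "nat \<Rightarrow> 'a mat"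
  assumes q0: "q \<noteq> 0"
    and ts: "tridiagonal_system n A E As Es d"
    and hE: "\<forall>i\<le>d. img n (E i) = eigenspace n A (q powi (2 * int i - int d))"
    and hEs: "\<forall>i\<le>d. img n (Es i) = eigenspace n As (q powi (int d - 2 * int i))"
    and KC: "K \<in> carrier_mat n n"
    and hK: "\<forall>i\<le>d. \<forall>u\<in>split_decomp n E Es d i. K *\<^sub>v u = q powi (int d - 2 * int i) \<cdot>\<^sub>v u"
  shows "\<forall>v\<in>carrier_vec n. K *\<^sub>v (As *\<^sub>v v - K *\<^sub>v v) = q^2 \<cdot>\<^sub>v (As *\<^sub>v (K *\<^sub>v v) - K *\<^sub>v (K *\<^sub>v v))"
    and "\<forall>v\<in>carrier_vec n. K *\<^sub>v (A *\<^sub>v v) = inverse (q^2) \<cdot>\<^sub>v (A *\<^sub>v (K *\<^sub>v v)) + (1 - inverse (q^2)) \<cdot>\<^sub>v v"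
    and "\<forall>v\<in>carrier_vec n. \<exists>x\<in>carrier_vec n. K *\<^sub>v x = v"
proof -
  have AC: "A \<in> carrier_mat n n" and AsC: "As \<in> carrier_mat n n"
    and dgA: "diagonalizable A" and dgAs: "diagonalizable As"
    and poA: "is_prim_idem_ordering n A E d" and poAs: "is_prim_idem_ordering n As Es d"
    and triA: "\<forall>i\<le>d. \<forall>j\<le>d. (i > Suc j \<or> j > Suc i) \<longrightarrow> E i * As * E j = 0\<^sub>m n n"
    and triAs: "\<forall>i\<le>d. \<forall>j\<le>d. (i > Suc j \<or> j > Suc i) \<longrightarrow> Es i * A * Es j = 0\<^sub>m n n"
    and irr: "\<And>W. subspace_of n W \<Longrightarrow> invariant_under A W \<Longrightarrow> invariant_under As W \<Longrightarrow> W = {0\<^sub>v n} \<or> W = carrier_vec n"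
    using ts unfolding tridiagonal_system_def by auto
  define th where "th i = q powi (2 * int i - int d)" for i
  define ths where "ths i = q powi (int d - 2 * int i)" for i
  have EC: "E k \<in> carrier_mat n n" if "k \<le> d" for k
    using poA that prim_idem_carrier[OF AC] unfolding is_prim_idem_ordering_def by metis
  have EsC: "Es k \<in> carrier_mat n n" if "k \<le> d" for k
    using poAs that prim_idem_carrier[OF AsC] unfolding is_prim_idem_ordering_def by metis
  have sumE: "finsum_vec TYPE('a) n (\<lambda>k. E k *\<^sub>v v) {0..d} = v" if "v \<in> carrier_vec n" for v
    by (rule sum_idem[OF AC dgA poA that])
  have sumEs: "finsum_vec TYPE('a) n (\<lambda>k. Es k *\<^sub>v v) {0..d} = v" if "v \<in> carrier_vec n" for v
    by (rule sum_idem[OF AsC dgAs poAs that])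
  define Fu where "Fu i = subsp_sum n (\<lambda>j. img n (E j)) {i..d}" for i
  define Fd where "Fd i = subsp_sum n (\<lambda>j. img n (Es j)) {0..i}" for i
  define U where "U i = split_decomp n E Es d i" for i
  have U_eq: "U i = Fd i \<inter> Fu i" for i unfolding U_def Fu_def Fd_def split_decomp_def by simp
  have spE: "subspace_of n (img n (E j))" if "j \<le> d" for j
    using hE that eigenspace_subspace[OF AC] by auto
  have spEs: "subspace_of n (img n (Es j))" if "j \<le> d" for j
    using hEs that eigenspace_subspace[OF AsC] by auto
  have imgE_c: "img n (E j) \<subseteq> carrier_vec n" if "j \<le> d" for j using sub_carrier[OF spE[OF that]] by auto
  have imgEs_c: "img n (Es j) \<subseteq> carrier_vec n" if "j \<le> d" for j using sub_carrier[OF spEs[OF that]] by auto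
  have spFu: "subspace_of n (Fu i)" for i unfolding Fu_def by (intro subsp_sum_subspace spE) auto
  have spFd: "subspace_of n (Fd i)" if "i \<le> d" for i unfolding Fd_def using that by (intro subsp_sum_subspace spEs) auto
  have spU: "subspace_of n (U i)" if "i \<le> d" for i unfolding U_eq using that spFu spFd sub_inter by blast
  have Fu_eig: "Fu i = subsp_sum n (\<lambda>j. eigenspace n A (th j)) {i..d}" for i
    unfolding Fu_def th_def using hE by (intro subsp_sum_cong) auto
  have Fd_eig: "Fd i = subsp_sum n (\<lambda>j. eigenspace n As (ths j)) {0..i}" if "i \<le> d" for i
    unfolding Fd_def ths_def using hEs that by (intro subsp_sum_cong) auto
  have Fu_mono: "Fu i \<subseteq> Fu i'" if "i' \<le> i" for i i'
    unfolding Fu_def using that by (intro subsp_sum_mono spE) auto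
  have Fd_mono: "Fd i \<subseteq> Fd i'" if "i \<le> i'" "i' \<le> d" for i i'
    unfolding Fd_def using that by (intro subsp_sum_mono spEs) auto
  have FuA: "A *\<^sub>v u - th i \<cdot>\<^sub>v u \<in> Fu (Suc i)" if "u \<in> Fu i" for i u
  proof -
    have "A *\<^sub>v u - th i \<cdot>\<^sub>v u \<in> subsp_sum n (\<lambda>j. eigenspace n A (th j)) ({i..d} - {i})"
      using that unfolding Fu_eig by (intro eig_shift[OF AC]) auto
    moreover have "{i..d} - {i} = {Suc i..d}" by auto
    ultimately show ?thesis unfolding Fu_eig by simp
  qed
  have Fu_top: "Fu (Suc d) = {0\<^sub>v n}" unfolding Fu_def using subsp_sum_empty by simp
  have FdAs: "As *\<^sub>v u - ths i \<cdot>\<^sub>v u \<in> (if i = 0 then {0\<^sub>v n} else Fd (i - 1))" if "i \<le> d" "u \<in> Fd i" for i u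
  proof -
    have "As *\<^sub>v u - ths i \<cdot>\<^sub>v u \<in> subsp_sum n (\<lambda>j. eigenspace n As (ths j)) ({0..i} - {i})"
      using that unfolding Fd_eig[OF that(1)] by (intro eig_shift[OF AsC]) auto
    moreover have "{0..i} - {i} = (if i = 0 then {} else {0..i-1})" by auto
    ultimately show ?thesis using Fd_eig[of "i - 1"] that(1) subsp_sum_empty by (cases "i = 0") auto
  qed
  have FdA: "A *\<^sub>v u \<in> Fd (Suc i)" if "i < d" "u \<in> Fd i" for i u
  proof (rule linmap_subsp_sum[OF linmap_mat0[OF AC] spFd[of "Suc i"] _ _ _ that(2)[unfolded Fd_def]])
    show "Suc i \<le> d" "finite {0..i}" using that by auto
    show "\<And>j. j \<in> {0..i} \<Longrightarrow> img n (Es j) \<subseteq> carrier_vec n" using imgEs_c that by auto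
    fix j w assume j: "j \<in> {0..i}" and w: "w \<in> img n (Es j)"
    have "A *\<^sub>v w \<in> subsp_sum n (\<lambda>k. img n (Es k)) ({0..d} \<inter> {j-1..j+1})"
      using j that by (intro tri_step[OF EsC sumEs AC triAs _ w]) auto
    also have "\<dots> \<subseteq> Fd (Suc i)" unfolding Fd_def using j that by (intro subsp_sum_mono spEs) auto
    finally show "A *\<^sub>v w \<in> Fd (Suc i)" .
  qed
  have FuAs: "As *\<^sub>v u \<in> Fu (i - 1)" if "0 < i" "i \<le> d" "u \<in> Fu i" for i u
  proof (rule linmap_subsp_sum[OF linmap_mat0[OF AsC] spFu[of "i - 1"] _ _ _ that(3)[unfolded Fu_def]])
    show "finite {i..d}" by auto
    show "\<And>j. j \<in> {i..d} \<Longrightarrow> img n (E j) \<subseteq> carrier_vec n" using imgE_c by auto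
    fix j w assume j: "j \<in> {i..d}" and w: "w \<in> img n (E j)"
    have "As *\<^sub>v w \<in> subsp_sum n (\<lambda>k. img n (E k)) ({0..d} \<inter> {j-1..j+1})"
      using j that by (intro tri_step[OF EC sumE AsC triA _ w]) auto
    also have "\<dots> \<subseteq> Fu (i - 1)" unfolding Fu_def using j that by (intro subsp_sum_mono spE) auto
    finally show "As *\<^sub>v w \<in> Fu (i - 1)" .
  qed
  have UA: "A *\<^sub>v u - th i \<cdot>\<^sub>v u \<in> (if i = d then {0\<^sub>v n} else U (Suc i))" if "i \<le> d" "u \<in> U i" for i u
  proof (cases "i = d")
    case True
    thus ?thesis using FuA[of u d] that Fu_top unfolding U_eq by auto
  next
    case False
    hence i: "i < d" using that by auto
    have "A *\<^sub>v u \<in> Fd (Suc i)" using FdA[OF i] that unfolding U_eq by auto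
    moreover have "th i \<cdot>\<^sub>v u \<in> Fd (Suc i)"
      using that Fd_mono[of i "Suc i"] i sub_smult[OF spFd[of "Suc i"]] unfolding U_eq by auto
    ultimately have "A *\<^sub>v u - th i \<cdot>\<^sub>v u \<in> Fd (Suc i)" using sub_minus[OF spFd[of "Suc i"]] i by auto
    moreover have "A *\<^sub>v u - th i \<cdot>\<^sub>v u \<in> Fu (Suc i)" using FuA that unfolding U_eq by auto
    ultimately show ?thesis using False unfolding U_eq by auto
  qed
  have UAs: "As *\<^sub>v u - ths i \<cdot>\<^sub>v u \<in> (if i = 0 then {0\<^sub>v n} else U (i - 1))" if "i \<le> d" "u \<in> U i" for i u
  proof (cases "i = 0")
    case True
    thus ?thesis using FdAs[of i u] that unfolding U_eq by auto
  next
    case False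
    have "As *\<^sub>v u \<in> Fu (i - 1)" using FuAs[of i u] False that unfolding U_eq by auto
    moreover have "ths i \<cdot>\<^sub>v u \<in> Fu (i - 1)"
      using that Fu_mono[of "i - 1" i] sub_smult[OF spFu[of "i - 1"]] unfolding U_eq by auto
    ultimately have "As *\<^sub>v u - ths i \<cdot>\<^sub>v u \<in> Fu (i - 1)" using sub_minus[OF spFu[of "i - 1"]] by auto
    moreover have "As *\<^sub>v u - ths i \<cdot>\<^sub>v u \<in> Fd (i - 1)" using FdAs[of i u] that False unfolding U_eq by auto
    ultimately show ?thesis using False unfolding U_eq by auto
  qed
  define Wsp where "Wsp = subsp_sum n U {0..d}"
  have spW: "subspace_of n Wsp" unfolding Wsp_def by (intro subsp_sum_subspace spU) auto
  have UW: "U i \<subseteq> Wsp" if "i \<le> d" for i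
    unfolding Wsp_def using that spU by (auto intro!: subsp_sum_in intro: sub_zero sub_carrier)
  have Uc: "U i \<subseteq> carrier_vec n" if "i \<le> d" for i using sub_carrier[OF spU[OF that]] by auto
  have invA: "invariant_under A Wsp" unfolding invariant_under_def
  proof
    fix w assume w: "w \<in> Wsp"
    show "A *\<^sub>v w \<in> Wsp"
    proof (rule linmap_subsp_sum[OF linmap_mat0[OF AC] spW _ _ _ w[unfolded Wsp_def]])
      fix i u assume i: "i \<in> {0..d}" and u: "u \<in> U i"
      have uc: "u \<in> carrier_vec n" using Uc i u by auto
      have "A *\<^sub>v u = (A *\<^sub>v u - th i \<cdot>\<^sub>v u) + th i \<cdot>\<^sub>v u" using uc AC by (intro eq_vecI) auto
      moreover have "A *\<^sub>v u - th i \<cdot>\<^sub>v u \<in> Wsp" using UA[of i u] i u UW[of "Suc i"] sub_zero[OF spW]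
        by (cases "i = d") auto
      moreover have "th i \<cdot>\<^sub>v u \<in> Wsp" using UW[of i] i u sub_smult[OF spW] by auto
      ultimately show "A *\<^sub>v u \<in> Wsp" using sub_add[OF spW] by metis
    qed (use Uc in auto)
  qed
  have invAs: "invariant_under As Wsp" unfolding invariant_under_def
  proof
    fix w assume w: "w \<in> Wsp"
    show "As *\<^sub>v w \<in> Wsp"
    proof (rule linmap_subsp_sum[OF linmap_mat0[OF AsC] spW _ _ _ w[unfolded Wsp_def]])
      fix i u assume i: "i \<in> {0..d}" and u: "u \<in> U i"
      have uc: "u \<in> carrier_vec n" using Uc i u by auto
      have i1: "i - 1 \<le> d" using i by auto
      have "As *\<^sub>v u = (As *\<^sub>v u - ths i \<cdot>\<^sub>v u) + ths i \<cdot>\<^sub>v u" using uc AsC by (intro eq_vecI) auto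
      moreover have "As *\<^sub>v u - ths i \<cdot>\<^sub>v u \<in> Wsp" using UAs[of i u] i u UW[OF i1] sub_zero[OF spW]
        by (cases "i = 0") auto
      moreover have "ths i \<cdot>\<^sub>v u \<in> Wsp" using UW[of i] i u sub_smult[OF spW] by auto
      ultimately show "As *\<^sub>v u \<in> Wsp" using sub_add[OF spW] by metis
    qed (use Uc in auto)
  qed
  obtain th' where inj': "inj_on th' {0..d}" and ev': "{k. eigenvalue As k} = th' ` {0..d}"
    and Esd: "\<And>i. i \<le> d \<Longrightarrow> Es i = prim_idem n As th' d i"
    using poAs unfolding is_prim_idem_ordering_def by auto
  have "eigenvalue As (th' 0)" using ev' by auto
  then obtain p where p: "p \<in> carrier_vec n" "p \<noteq> 0\<^sub>v n" "As *\<^sub>v p = th' 0 \<cdot>\<^sub>v p"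
    unfolding eigenvalue_def eigenvector_def using AsC by auto
  have "Es 0 *\<^sub>v p = p"
    using Esd[of 0] prim_idem_eig[OF AsC p(1) p(3), of th' d 0] coeff_delta[OF inj', of 0 0] p(1) by simp
  hence pEs: "p \<in> img n (Es 0)" unfolding img_def using p(1) by (intro CollectI exI[of _ p]) auto
  have pFd: "p \<in> Fd 0" unfolding Fd_def using pEs p(1) spEs
    by (intro subsp_sum_in) (auto intro: sub_zero)
  have pFu: "p \<in> Fu 0" unfolding Fu_def subsp_sum_def using sumE[OF p(1)] p(1) unfolding img_def
    by (intro CollectI exI[of _ "\<lambda>k. E k *\<^sub>v p"]) auto
  have pW: "p \<in> Wsp" using UW[of 0] pFd pFu unfolding U_eq by auto
  have Wall: "Wsp = carrier_vec n" using irr[OF spW invA invAs] pW p(2) by auto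
  have span: "f v = 0\<^sub>v n" if f: "linmap n f" and h: "\<And>i u. i \<le> d \<Longrightarrow> u \<in> U i \<Longrightarrow> f u = 0\<^sub>v n"
    and v: "v \<in> carrier_vec n" for f v
  proof -
    have "Wsp \<subseteq> {v \<in> carrier_vec n. f v \<in> {0\<^sub>v n}}" unfolding Wsp_def
      using h Uc by (intro subsp_sum_sub[OF preimage_subspace[OF f zero_subspace]]) auto
    thus ?thesis using v Wall by auto
  qed
  have KU: "K *\<^sub>v u = ths i \<cdot>\<^sub>v u" if "i \<le> d" "u \<in> U i" for i u
    using hK that unfolding U_def ths_def by auto
  have linK: "linmap n (\<lambda>v. K *\<^sub>v v)" by (rule linmap_mat0[OF KC])
  have linA: "linmap n (\<lambda>v. A *\<^sub>v v)" by (rule linmap_mat0[OF AC])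
  have linAs: "linmap n (\<lambda>v. As *\<^sub>v v)" by (rule linmap_mat0[OF AsC])
  show "\<forall>v\<in>carrier_vec n. K *\<^sub>v (As *\<^sub>v v - K *\<^sub>v v) = q^2 \<cdot>\<^sub>v (As *\<^sub>v (K *\<^sub>v v) - K *\<^sub>v (K *\<^sub>v v))"
  proof
    fix v :: "'a vec" assume v: "v \<in> carrier_vec n"
    let ?f = "\<lambda>v. K *\<^sub>v (As *\<^sub>v v - K *\<^sub>v v) - q^2 \<cdot>\<^sub>v (As *\<^sub>v (K *\<^sub>v v) - K *\<^sub>v (K *\<^sub>v v))"
    have lf: "linmap n ?f"
      by (intro linmap_diff linmap_sm linmap_comp[OF linK] linmap_comp[OF linAs] linmap_comp[OF linK linK] linK linAs)
    have "?f v = 0\<^sub>v n"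
    proof (rule span[OF lf _ v])
      fix i u assume i: "i \<le> d" and u: "u \<in> U i"
      have uc: "u \<in> carrier_vec n" using Uc i u by auto
      define w where "w = As *\<^sub>v u - ths i \<cdot>\<^sub>v u"
      have wc: "w \<in> carrier_vec n" unfolding w_def using uc AsC by simp
      have Kw: "K *\<^sub>v w = (q^2 * ths i) \<cdot>\<^sub>v w"
      proof (cases "i = 0")
        case True
        hence "w = 0\<^sub>v n" using UAs[OF i u] unfolding w_def by simp
        thus ?thesis using KC by (simp add: mz)
      next
        case False
        have "w \<in> U (i - 1)" using UAs[OF i u] False unfolding w_def by simp
        hence "K *\<^sub>v w = ths (i - 1) \<cdot>\<^sub>v w" using KU[of "i - 1" w] i by simp
        thus ?thesis using powi_pred[OF q0, of i d] False unfolding ths_def by simp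
      qed
      have Ku: "K *\<^sub>v u = ths i \<cdot>\<^sub>v u" by (rule KU[OF i u])
      have e1: "K *\<^sub>v (As *\<^sub>v u - K *\<^sub>v u) = (q^2 * ths i) \<cdot>\<^sub>v w" unfolding Ku w_def[symmetric] by (rule Kw)
      have e2: "As *\<^sub>v (K *\<^sub>v u) = ths i \<cdot>\<^sub>v (As *\<^sub>v u)" unfolding Ku using AsC uc by (simp add: mult_mat_vec)
      have e3: "K *\<^sub>v (K *\<^sub>v u) = ths i \<cdot>\<^sub>v (ths i \<cdot>\<^sub>v u)" unfolding Ku using KC uc by (simp add: mult_mat_vec Ku)
      show "?f u = 0\<^sub>v n" unfolding e1 e2 e3 w_def using uc AsC
        by (intro eq_vecI) (auto simp: algebra_simps)
    qed
    thus "K *\<^sub>v (As *\<^sub>v v - K *\<^sub>v v) = q^2 \<cdot>\<^sub>v (As *\<^sub>v (K *\<^sub>v v) - K *\<^sub>v (K *\<^sub>v v))"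
    proof -
      assume z: "?f v = 0\<^sub>v n"
      show ?thesis
      proof (rule eq_vecI)
        fix j assume "j < dim_vec (q^2 \<cdot>\<^sub>v (As *\<^sub>v (K *\<^sub>v v) - K *\<^sub>v (K *\<^sub>v v)))"
        hence j: "j < n" using AsC KC by simp
        have "?f v $ j = 0" using z j by simp
        thus "(K *\<^sub>v (As *\<^sub>v v - K *\<^sub>v v)) $ j = (q^2 \<cdot>\<^sub>v (As *\<^sub>v (K *\<^sub>v v) - K *\<^sub>v (K *\<^sub>v v))) $ j"
          using j KC AsC v by simp
      qed (use KC AsC v in simp)
    qed
  qed
  show "\<forall>v\<in>carrier_vec n. K *\<^sub>v (A *\<^sub>v v) = inverse (q^2) \<cdot>\<^sub>v (A *\<^sub>v (K *\<^sub>v v)) + (1 - inverse (q^2)) \<cdot>\<^sub>v v"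
  proof
    fix v :: "'a vec" assume v: "v \<in> carrier_vec n"
    let ?f = "\<lambda>v. K *\<^sub>v (A *\<^sub>v v) - inverse (q^2) \<cdot>\<^sub>v (A *\<^sub>v (K *\<^sub>v v)) - (1 - inverse (q^2)) \<cdot>\<^sub>v v"
    have lf: "linmap n ?f"
      by (intro linmap_diff linmap_sm linmap_comp[OF linK linA] linmap_comp[OF linA linK] linmap_id)
    have "?f v = 0\<^sub>v n"
    proof (rule span[OF lf _ v])
      fix i u assume i: "i \<le> d" and u: "u \<in> U i"
      have uc: "u \<in> carrier_vec n" using Uc i u by auto
      define w where "w = A *\<^sub>v u - th i \<cdot>\<^sub>v u"
      have wc: "w \<in> carrier_vec n" unfolding w_def using uc AC by simp
      have Kw: "K *\<^sub>v w = (inverse (q^2) * ths i) \<cdot>\<^sub>v w"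
      proof (cases "i = d")
        case True
        hence "w = 0\<^sub>v n" using UA[OF i u] unfolding w_def by simp
        thus ?thesis using KC by (simp add: mz)
      next
        case False
        have "w \<in> U (Suc i)" using UA[OF i u] False unfolding w_def by simp
        hence "K *\<^sub>v w = ths (Suc i) \<cdot>\<^sub>v w" using KU[of "Suc i" w] i False by simp
        thus ?thesis using powi_succ[OF q0, of d i] unfolding ths_def by simp
      qed
      have Ku: "K *\<^sub>v u = ths i \<cdot>\<^sub>v u" by (rule KU[OF i u])
      have Au: "A *\<^sub>v u = w + th i \<cdot>\<^sub>v u" unfolding w_def using uc AC by (intro eq_vecI) auto
      have e1: "K *\<^sub>v (A *\<^sub>v u) = (inverse (q^2) * ths i) \<cdot>\<^sub>v w + th i \<cdot>\<^sub>v (ths i \<cdot>\<^sub>v u)"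
        unfolding Au using KC wc uc by (simp add: mult_add_distrib_mat_vec mult_mat_vec Kw Ku)
      have e2: "A *\<^sub>v (K *\<^sub>v u) = ths i \<cdot>\<^sub>v (w + th i \<cdot>\<^sub>v u)" unfolding Ku using AC uc by (simp add: mult_mat_vec Au)
      have tt: "th i * ths i = 1" unfolding th_def ths_def by (rule powi_prod[OF q0])
      show "?f u = 0\<^sub>v n" unfolding e1 e2
      proof (rule eq_vecI)
        fix j assume "j < dim_vec (0\<^sub>v n :: 'a vec)"
        hence j: "j < n" by simp
        have "inverse (q^2) * ths i * w $ j + th i * (ths i * u $ j) - inverse (q^2) * (ths i * (w $ j + th i * u $ j)) - (1 - inverse (q^2)) * u $ j = 0"
          using tt by Groebner_Basis.algebra
        thus "((inverse (q^2) * ths i) \<cdot>\<^sub>v w + th i \<cdot>\<^sub>v (ths i \<cdot>\<^sub>v u) - inverse (q^2) \<cdot>\<^sub>v (ths i \<cdot>\<^sub>v (w + th i \<cdot>\<^sub>v u)) - (1 - inverse (q^2)) \<cdot>\<^sub>v u) $ j = 0\<^sub>v n $ j"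
          using j wc uc by simp
      qed (use wc uc in simp)
    qed
    show "K *\<^sub>v (A *\<^sub>v v) = inverse (q^2) \<cdot>\<^sub>v (A *\<^sub>v (K *\<^sub>v v)) + (1 - inverse (q^2)) \<cdot>\<^sub>v v"
    proof (rule eq_vecI)
      fix j assume "j < dim_vec (inverse (q^2) \<cdot>\<^sub>v (A *\<^sub>v (K *\<^sub>v v)) + (1 - inverse (q^2)) \<cdot>\<^sub>v v)"
      hence j: "j < n" using v by simp
      have "?f v $ j = 0" using \<open>?f v = 0\<^sub>v n\<close> j by simp
      thus "(K *\<^sub>v (A *\<^sub>v v)) $ j = (inverse (q^2) \<cdot>\<^sub>v (A *\<^sub>v (K *\<^sub>v v)) + (1 - inverse (q^2)) \<cdot>\<^sub>v v) $ j"
        using j KC AC v by (simp add: algebra_simps)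
    qed (use KC AC v in simp)
  qed
  show "\<forall>v\<in>carrier_vec n. \<exists>x\<in>carrier_vec n. K *\<^sub>v x = v"
  proof
    fix v :: "'a vec" assume v: "v \<in> carrier_vec n"
    define T where "T = {v \<in> carrier_vec n. \<exists>x\<in>carrier_vec n. K *\<^sub>v x = v}"
    have spT: "subspace_of n T" unfolding subspace_of_def T_def
    proof (intro conjI ballI allI)
      show "0\<^sub>v n \<in> {v \<in> carrier_vec n. \<exists>x\<in>carrier_vec n. K *\<^sub>v x = v}"
        using KC by (auto intro!: bexI[of _ "0\<^sub>v n"] simp: mz)
    next
      fix a b assume a: "a \<in> {v \<in> carrier_vec n. \<exists>x\<in>carrier_vec n. K *\<^sub>v x = v}"
        and b: "b \<in> {v \<in> carrier_vec n. \<exists>x\<in>carrier_vec n. K *\<^sub>v x = v}"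
      then obtain x y where "x \<in> carrier_vec n" "K *\<^sub>v x = a" "y \<in> carrier_vec n" "K *\<^sub>v y = b" by auto
      thus "a + b \<in> {v \<in> carrier_vec n. \<exists>x\<in>carrier_vec n. K *\<^sub>v x = v}"
        using KC by (auto intro!: bexI[of _ "x + y"] simp: mult_add_distrib_mat_vec)
    next
      fix c :: 'a and a assume a: "a \<in> {v \<in> carrier_vec n. \<exists>x\<in>carrier_vec n. K *\<^sub>v x = v}"
      then obtain x where "x \<in> carrier_vec n" "K *\<^sub>v x = a" by auto
      thus "c \<cdot>\<^sub>v a \<in> {v \<in> carrier_vec n. \<exists>x\<in>carrier_vec n. K *\<^sub>v x = v}"
        using KC by (auto intro!: bexI[of _ "c \<cdot>\<^sub>v x"] simp: mult_mat_vec)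
    qed auto
    have "Wsp \<subseteq> T" unfolding Wsp_def
    proof (rule subsp_sum_sub[OF spT])
      fix i assume i: "i \<in> {0..d}"
      show "U i \<subseteq> T"
      proof
        fix u assume u: "u \<in> U i"
        have uc: "u \<in> carrier_vec n" using Uc i u by auto
        have nz: "ths i \<noteq> 0" unfolding ths_def using q0 by simp
        have "K *\<^sub>v (inverse (ths i) \<cdot>\<^sub>v u) = inverse (ths i) \<cdot>\<^sub>v (ths i \<cdot>\<^sub>v u)" using KU[of i u] i u uc KC nz
          by (simp add: mult_mat_vec)
        also have "\<dots> = u" using uc nz by (intro eq_vecI) auto
        finally have "K *\<^sub>v (inverse (ths i) \<cdot>\<^sub>v u) = u" .
        thus "u \<in> T" unfolding T_def using uc by (auto intro!: bexI[of _ "inverse (ths i) \<cdot>\<^sub>v u"])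
      qed
    qed auto
    thus "\<exists>x\<in>carrier_vec n. K *\<^sub>v x = v" using Wall v unfolding T_def by auto
  qed
qed





lemma vandm:
  fixes x y z r :: "'b::field"
  assumes "x + y + z = 0" "x + r^2 * y + r^4 * z = 0" "x + r^4 * y + r^8 * z = 0"
    and "r \<noteq> 0" "r^2 \<noteq> 1" "r^4 \<noteq> 1"
  shows "x = 0 \<and> y = 0 \<and> z = 0"
proof -
  have a3: "r^4-r^2 = r^2 * (r^2 - 1)" by Groebner_Basis.algebra
  have D: "(r^2-1)*(r^4-1)*(r^4-r^2) \<noteq> 0" unfolding a3 using assms(4-6) by simp
  have "z*((r^2-1)*(r^4-1)*(r^4-r^2)) = 0" using assms(1-3) by Groebner_Basis.algebra
  hence z: "z = 0" using D by simp
  have "y*((r^2-1)*(r^4-1)*(r^4-r^2)) = 0" using assms(1-3) by Groebner_Basis.algebra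
  hence "y = 0" using D by simp
  with z assms(1) show ?thesis by simp
qed

definition Tf :: "'a::field \<Rightarrow> ('a vec \<Rightarrow> 'a vec) \<Rightarrow> ('a vec \<Rightarrow> 'a vec) \<Rightarrow> ('a vec \<Rightarrow> 'a vec) \<Rightarrow> ('a vec \<Rightarrow> 'a vec) \<Rightarrow> 'a vec \<Rightarrow> 'a vec" where
  "Tf q a y1 y2 y3 v = y1 (y2 (y3 (a v))) - qint3 q \<cdot>\<^sub>v y1 (y2 (a (y3 v))) + qint3 q \<cdot>\<^sub>v y1 (a (y2 (y3 v))) - a (y1 (y2 (y3 v)))"

definition S1f :: "'a::field \<Rightarrow> ('a vec \<Rightarrow> 'a vec) \<Rightarrow> ('a vec \<Rightarrow> 'a vec) \<Rightarrow> 'a vec \<Rightarrow> 'a vec" where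
  "S1f q a y v = a (a (a (y v))) - qint3 q \<cdot>\<^sub>v a (a (y (a v))) + qint3 q \<cdot>\<^sub>v a (y (a (a v))) - y (a (a (a v)))"

locale qops =
  fixes n :: nat and a k l :: "'a::field vec \<Rightarrow> 'a vec" and q :: 'a
  assumes q0: "q \<noteq> 0"
  and a_c[simp]: "x \<in> carrier_vec n \<Longrightarrow> a x \<in> carrier_vec n"
  and k_c[simp]: "x \<in> carrier_vec n \<Longrightarrow> k x \<in> carrier_vec n"
  and l_c[simp]: "x \<in> carrier_vec n \<Longrightarrow> l x \<in> carrier_vec n"
  and a_add[simp]: "x \<in> carrier_vec n \<Longrightarrow> y \<in> carrier_vec n \<Longrightarrow> a (x + y) = a x + a y"
  and k_add[simp]: "x \<in> carrier_vec n \<Longrightarrow> y \<in> carrier_vec n \<Longrightarrow> k (x + y) = k x + k y"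
  and l_add[simp]: "x \<in> carrier_vec n \<Longrightarrow> y \<in> carrier_vec n \<Longrightarrow> l (x + y) = l x + l y"
  and a_sm[simp]: "x \<in> carrier_vec n \<Longrightarrow> a (c \<cdot>\<^sub>v x) = c \<cdot>\<^sub>v a x"
  and k_sm[simp]: "x \<in> carrier_vec n \<Longrightarrow> k (c \<cdot>\<^sub>v x) = c \<cdot>\<^sub>v k x"
  and l_sm[simp]: "x \<in> carrier_vec n \<Longrightarrow> l (c \<cdot>\<^sub>v x) = c \<cdot>\<^sub>v l x"
  and a_mi[simp]: "x \<in> carrier_vec n \<Longrightarrow> y \<in> carrier_vec n \<Longrightarrow> a (x - y) = a x - a y"
  and k_mi[simp]: "x \<in> carrier_vec n \<Longrightarrow> y \<in> carrier_vec n \<Longrightarrow> k (x - y) = k x - k y"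
  and l_mi[simp]: "x \<in> carrier_vec n \<Longrightarrow> y \<in> carrier_vec n \<Longrightarrow> l (x - y) = l x - l y"
  and kl[simp]: "x \<in> carrier_vec n \<Longrightarrow> k (l x) = q^2 \<cdot>\<^sub>v l (k x)"
  and ka[simp]: "x \<in> carrier_vec n \<Longrightarrow> k (a x) = inverse (q^2) \<cdot>\<^sub>v a (k x) + (1 - inverse (q^2)) \<cdot>\<^sub>v x"
begin

lemma a_d[simp]: "x \<in> carrier_vec n \<Longrightarrow> dim_vec (a x) = n"
  using a_c carrier_vecD by blast
lemma k_d[simp]: "x \<in> carrier_vec n \<Longrightarrow> dim_vec (k x) = n"
  using k_c carrier_vecD by blast
lemma l_d[simp]: "x \<in> carrier_vec n \<Longrightarrow> dim_vec (l x) = n"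
  using l_c carrier_vecD by blast

lemma k0: "k (0\<^sub>v n) = 0\<^sub>v n"
proof -
  have e: "(0::'a) \<cdot>\<^sub>v 0\<^sub>v n = 0\<^sub>v n" by (intro eq_vecI) auto
  have "k (0\<^sub>v n) = 0 \<cdot>\<^sub>v k (0\<^sub>v n)" using k_sm[of "0\<^sub>v n" 0] e by simp
  also have "\<dots> = 0\<^sub>v n" by (intro eq_vecI) auto
  finally show ?thesis .
qed

abbreviation T where "T \<equiv> Tf q a"

lemma P0: assumes v: "v \<in> carrier_vec n" shows "T k k k v = 0\<^sub>v n"
  apply (rule eq_vecI)
   apply (simp add: Tf_def qint3_def v)
   apply (simp add: field_simps q0)
  subgoal for i
    by Groebner_Basis.algebra
  apply (simp add: Tf_def v)
  done

lemma P1: assumes v: "v \<in> carrier_vec n" shows "k (T l k k v + T k l k v + T k k l v) = T l k k (k v) + T k l k (k v) + T k k l (k v)"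
  apply (rule eq_vecI)
   apply (simp add: Tf_def qint3_def v)
   apply (simp add: field_simps q0)
   apply Groebner_Basis.algebra
  apply (simp add: Tf_def v)
  done

lemma P2: assumes v: "v \<in> carrier_vec n" shows "k (T l l k v + T l k l v + T k l l v) = q^2 \<cdot>\<^sub>v (T l l k (k v) + T l k l (k v) + T k l l (k v))"
  apply (rule eq_vecI)
   apply (simp add: Tf_def qint3_def v)
   apply (simp add: field_simps q0)
   apply Groebner_Basis.algebra
  apply (simp add: Tf_def v)
  done

lemma P3: assumes v: "v \<in> carrier_vec n" shows "k (T l l l v) = q^4 \<cdot>\<^sub>v T l l l (k v)"
  apply (rule eq_vecI)
   apply (simp add: Tf_def qint3_def v)
   apply (simp add: field_simps q0)
   apply Groebner_Basis.algebra
  apply (simp add: Tf_def v)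
  done

abbreviation S1 where "S1 \<equiv> S1f q a"

lemma S1k: assumes v: "v \<in> carrier_vec n" shows "S1 k v = 0\<^sub>v n"
  apply (rule eq_vecI)
   apply (simp add: S1f_def qint3_def v)
   apply (simp add: field_simps q0)
   apply Groebner_Basis.algebra
  apply (simp add: S1f_def v)
  done

lemma S1lin: assumes v: "v \<in> carrier_vec n" shows "S1 (\<lambda>x. k x + t \<cdot>\<^sub>v l x) v = S1 k v + t \<cdot>\<^sub>v S1 l v"
  apply (rule eq_vecI)
   apply (simp add: S1f_def v)
   apply Groebner_Basis.algebra
  apply (simp add: S1f_def v)
  done

lemma S2exp: assumes v: "v \<in> carrier_vec n" shows "T (\<lambda>x. k x + t \<cdot>\<^sub>v l x) (\<lambda>x. k x + t \<cdot>\<^sub>v l x) (\<lambda>x. k x + t \<cdot>\<^sub>v l x) v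
   = T k k k v + t \<cdot>\<^sub>v (T l k k v + T k l k v + T k k l v) + t^2 \<cdot>\<^sub>v (T l l k v + T l k l v + T k l l v) + t^3 \<cdot>\<^sub>v T l l l v"
  apply (rule eq_vecI)
   apply (simp add: Tf_def v)
   apply Groebner_Basis.algebra
  apply (simp add: Tf_def v)
  done

definition "P1 w = T l k k w + T k l k w + T k k l w"
definition "P2 w = T l l k w + T l k l w + T k l l w"
definition "P3 w = T l l l w"
lemma P1c: "w \<in> carrier_vec n \<Longrightarrow> k (P1 w) = P1 (k w)" using P1 unfolding P1_def by simp
lemma P2c: "w \<in> carrier_vec n \<Longrightarrow> k (P2 w) = q^2 \<cdot>\<^sub>v P2 (k w)" using P2 unfolding P2_def by simp
lemma P3c: "w \<in> carrier_vec n \<Longrightarrow> k (P3 w) = q^4 \<cdot>\<^sub>v P3 (k w)" using P3 unfolding P3_def by simp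

theorem alg_main:
  assumes h1: "\<And>v. v \<in> carrier_vec n \<Longrightarrow> S1 (\<lambda>x. k x + l x) v = 0\<^sub>v n"
    and h2: "\<And>v. v \<in> carrier_vec n \<Longrightarrow> T (\<lambda>x. k x + l x) (\<lambda>x. k x + l x) (\<lambda>x. k x + l x) v = 0\<^sub>v n"
    and surj: "\<And>v. v \<in> carrier_vec n \<Longrightarrow> \<exists>x\<in>carrier_vec n. k x = v"
    and q2: "q^2 \<noteq> 1" and q4: "q^4 \<noteq> 1"
    and v: "v \<in> carrier_vec n"
  shows "S1 (\<lambda>x. k x + t \<cdot>\<^sub>v l x) v = 0\<^sub>v n \<and> T (\<lambda>x. k x + t \<cdot>\<^sub>v l x) (\<lambda>x. k x + t \<cdot>\<^sub>v l x) (\<lambda>x. k x + t \<cdot>\<^sub>v l x) v = 0\<^sub>v n"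
proof -
  have S1l: "S1 l w = 0\<^sub>v n" if w: "w \<in> carrier_vec n" for w
  proof -
    have "S1 (\<lambda>x. k x + 1 \<cdot>\<^sub>v l x) w = S1 k w + 1 \<cdot>\<^sub>v S1 l w" by (rule S1lin[OF w])
    hence "0\<^sub>v n = 0\<^sub>v n + S1 l w" using h1[OF w] S1k[OF w] by simp
    moreover have "S1 l w \<in> carrier_vec n" using w by (simp add: S1f_def)
    ultimately show ?thesis by simp
  qed
  have c1: "S1 l w \<in> carrier_vec n" if w: "w \<in> carrier_vec n" for w
    using w by (simp add: S1f_def)
  have Pc: "P1 w \<in> carrier_vec n" "P2 w \<in> carrier_vec n" "P3 w \<in> carrier_vec n" if "w \<in> carrier_vec n" for w
    using that by (auto simp: P1_def P2_def P3_def Tf_def)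
  have sum0: "P1 w + P2 w + P3 w = 0\<^sub>v n" if w: "w \<in> carrier_vec n" for w
  proof -
    have "T (\<lambda>x. k x + 1 \<cdot>\<^sub>v l x) (\<lambda>x. k x + 1 \<cdot>\<^sub>v l x) (\<lambda>x. k x + 1 \<cdot>\<^sub>v l x) w = 
       T k k k w + 1 \<cdot>\<^sub>v P1 w + 1^2 \<cdot>\<^sub>v P2 w + 1^3 \<cdot>\<^sub>v P3 w" unfolding P1_def P2_def P3_def by (rule S2exp[OF w])
    hence "0\<^sub>v n = 0\<^sub>v n + P1 w + P2 w + P3 w" using h2[OF w] P0[OF w] by simp
    thus ?thesis using Pc[OF w] by simp
  qed
  have sum0i: "P1 w $ i + P2 w $ i + P3 w $ i = 0" if w: "w \<in> carrier_vec n" and i: "i < n" for w i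
    using arg_cong[OF sum0[OF w], of "\<lambda>u. u $ i"] Pc[OF w] i by (simp add: add.assoc)
  have allz: "P1 w = 0\<^sub>v n \<and> P2 w = 0\<^sub>v n \<and> P3 w = 0\<^sub>v n" if w: "w \<in> carrier_vec n" for w
  proof -
    obtain x1 where x1: "x1 \<in> carrier_vec n" "k x1 = w" using surj[OF w] by blast
    obtain x where x: "x \<in> carrier_vec n" "k x = x1" using surj[OF x1(1)] by blast
    have comp: "P1 w $ i = 0 \<and> P2 w $ i = 0 \<and> P3 w $ i = 0" if i: "i < n" for i
    proof (rule vandm[OF _ _ _ q0 q2 q4])
      show "P1 w $ i + P2 w $ i + P3 w $ i = 0" using sum0i[OF w i] .
      have "k (P1 x1 + P2 x1 + P3 x1) $ i = 0" using sum0[OF x1(1)] k0 i by simp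
      thus "P1 w $ i + q^2 * P2 w $ i + q^4 * P3 w $ i = 0" using x1 Pc[OF x1(1)] Pc[OF w] i by (simp add: P1c P2c P3c add.assoc)
      have "k (k (P1 x + P2 x + P3 x)) $ i = 0" using sum0[OF x(1)] k0 i by simp
      thus "P1 w $ i + q^4 * P2 w $ i + q^8 * P3 w $ i = 0" using x x1 Pc[OF x(1)] Pc[OF x1(1)] Pc[OF w] i
        by (simp add: P1c P2c P3c add.assoc)
    qed
    show ?thesis using comp Pc[OF w] by (auto intro!: eq_vecI)
  qed
  show ?thesis
  proof
    show "S1 (\<lambda>x. k x + t \<cdot>\<^sub>v l x) v = 0\<^sub>v n" using S1lin[OF v] S1k[OF v] S1l[OF v] by simp
    show "T (\<lambda>x. k x + t \<cdot>\<^sub>v l x) (\<lambda>x. k x + t \<cdot>\<^sub>v l x) (\<lambda>x. k x + t \<cdot>\<^sub>v l x) v = 0\<^sub>v n"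
      using S2exp[OF v, of t] P0[OF v] allz[OF v] unfolding P1_def P2_def P3_def by simp
  qed
qed

end



lemma zmv: "v \<in> carrier_vec n \<Longrightarrow> 0\<^sub>m m n *\<^sub>v v = (0\<^sub>v m :: 'a::field vec)"
  by (intro eq_vecI) (auto simp: row_def scalar_prod_def)

lemma w4: assumes "X1 \<in> carrier_mat n n" "X2 \<in> carrier_mat n n" "X3 \<in> carrier_mat n n" "X4 \<in> carrier_mat n n"
  and v: "v \<in> carrier_vec n"
  shows "(X1 * X2 * X3 * X4) *\<^sub>v v = X1 *\<^sub>v (X2 *\<^sub>v (X3 *\<^sub>v (X4 *\<^sub>v (v :: 'a::field vec))))"
proof -
  have "(X1 * X2 * X3 * X4) *\<^sub>v v = (X1 * X2 * X3) *\<^sub>v (X4 *\<^sub>v v)" by (rule assoc_mult_mat_vec) (use assms in auto)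
  also have "\<dots> = (X1 * X2) *\<^sub>v (X3 *\<^sub>v (X4 *\<^sub>v v))" by (rule assoc_mult_mat_vec) (use assms in auto)
  also have "\<dots> = X1 *\<^sub>v (X2 *\<^sub>v (X3 *\<^sub>v (X4 *\<^sub>v v)))" by (rule assoc_mult_mat_vec) (use assms in auto)
  finally show ?thesis .
qed

lemma lin4: assumes M: "M1 \<in> carrier_mat n n" "M2 \<in> carrier_mat n n" "M3 \<in> carrier_mat n n" "M4 \<in> carrier_mat n n"
  and v: "v \<in> carrier_vec n"
  shows "(M1 - c \<cdot>\<^sub>m M2 + c \<cdot>\<^sub>m M3 - M4) *\<^sub>v v = M1 *\<^sub>v v - c \<cdot>\<^sub>v (M2 *\<^sub>v v) + c \<cdot>\<^sub>v (M3 *\<^sub>v v) - M4 *\<^sub>v (v :: 'a::field vec)"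
proof -
  have "(M1 - c \<cdot>\<^sub>m M2 + c \<cdot>\<^sub>m M3 - M4) *\<^sub>v v = (M1 - c \<cdot>\<^sub>m M2 + c \<cdot>\<^sub>m M3) *\<^sub>v v - M4 *\<^sub>v v"
    by (rule minus_mult_distrib_mat_vec) (use assms in auto)
  also have "(M1 - c \<cdot>\<^sub>m M2 + c \<cdot>\<^sub>m M3) *\<^sub>v v = (M1 - c \<cdot>\<^sub>m M2) *\<^sub>v v + (c \<cdot>\<^sub>m M3) *\<^sub>v v"
    by (rule add_mult_distrib_mat_vec) (use assms in auto)
  also have "(M1 - c \<cdot>\<^sub>m M2) *\<^sub>v v = M1 *\<^sub>v v - (c \<cdot>\<^sub>m M2) *\<^sub>v v"
    by (rule minus_mult_distrib_mat_vec) (use assms in auto)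
  also have "(c \<cdot>\<^sub>m M2) *\<^sub>v v = c \<cdot>\<^sub>v (M2 *\<^sub>v v)" by (rule smat_mv[OF M(2) v])
  also have "(c \<cdot>\<^sub>m M3) *\<^sub>v v = c \<cdot>\<^sub>v (M3 *\<^sub>v v)" by (rule smat_mv[OF M(3) v])
  finally show ?thesis .
qed

lemma mv_S1: assumes X: "X \<in> carrier_mat n n" and Y: "Y \<in> carrier_mat n n" and v: "v \<in> carrier_vec n"
  shows "(X * X * X * Y - qint3 q \<cdot>\<^sub>m (X * X * Y * X) + qint3 q \<cdot>\<^sub>m (X * Y * X * X) - Y * X * X * X) *\<^sub>v v
    = S1f q (\<lambda>x. X *\<^sub>v x) (\<lambda>x. Y *\<^sub>v x) (v :: 'a::field vec)"
  unfolding S1f_def lin4[OF mult_carrier_mat[OF mult_carrier_mat[OF mult_carrier_mat[OF X X] X] Y]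
    mult_carrier_mat[OF mult_carrier_mat[OF mult_carrier_mat[OF X X] Y] X]
    mult_carrier_mat[OF mult_carrier_mat[OF mult_carrier_mat[OF X Y] X] X]
    mult_carrier_mat[OF mult_carrier_mat[OF mult_carrier_mat[OF Y X] X] X] v]
  using X Y v by (simp add: w4 del: assoc_mult_mat)

lemma mv_T: assumes X: "X \<in> carrier_mat n n" and Y: "Y \<in> carrier_mat n n" and v: "v \<in> carrier_vec n"
  shows "(Y * Y * Y * X - qint3 q \<cdot>\<^sub>m (Y * Y * X * Y) + qint3 q \<cdot>\<^sub>m (Y * X * Y * Y) - X * Y * Y * Y) *\<^sub>v v
    = Tf q (\<lambda>x. X *\<^sub>v x) (\<lambda>x. Y *\<^sub>v x) (\<lambda>x. Y *\<^sub>v x) (\<lambda>x. Y *\<^sub>v x) (v :: 'a::field vec)"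
  unfolding Tf_def lin4[OF mult_carrier_mat[OF mult_carrier_mat[OF mult_carrier_mat[OF Y Y] Y] X]
    mult_carrier_mat[OF mult_carrier_mat[OF mult_carrier_mat[OF Y Y] X] Y]
    mult_carrier_mat[OF mult_carrier_mat[OF mult_carrier_mat[OF Y X] Y] Y]
    mult_carrier_mat[OF mult_carrier_mat[OF mult_carrier_mat[OF X Y] Y] Y] v]
  using X Y v by (simp add: w4 del: assoc_mult_mat)

lemma mat0: fixes M :: "'a::field mat" assumes M: "M \<in> carrier_mat n n" and h: "\<And>v. v \<in> carrier_vec n \<Longrightarrow> M *\<^sub>v v = 0\<^sub>v n"
  shows "M = 0\<^sub>m n n"
proof (rule eq_matI)
  fix i j assume i: "i < dim_row (0\<^sub>m n n :: 'a mat)" and j: "j < dim_col (0\<^sub>m n n :: 'a mat)"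
  have "(M *\<^sub>v unit_vec n j) $ i = M $$ (i, j)" using M i j by simp
  thus "M $$ (i, j) = 0\<^sub>m n n $$ (i, j)" using h[of "unit_vec n j"] i j by simp
qed (use M in auto)

lemma S1f_cong: assumes "\<And>x. x \<in> carrier_vec n \<Longrightarrow> a x \<in> carrier_vec n"
  and "\<And>x. x \<in> carrier_vec n \<Longrightarrow> y x = y' x" and "v \<in> carrier_vec n"
  shows "S1f q a y v = S1f q a y' v"
  unfolding S1f_def using assms by simp

lemma Tf_cong: assumes "\<And>x. x \<in> carrier_vec n \<Longrightarrow> a x \<in> carrier_vec n"
  and "\<And>x. x \<in> carrier_vec n \<Longrightarrow> y x = y' x" and "\<And>x. x \<in> carrier_vec n \<Longrightarrow> y x \<in> carrier_vec n"
  and "v \<in> carrier_vec n"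
  shows "Tf q a y y y v = Tf q a y' y' y' v"
  unfolding Tf_def using assms by simp

theorem lemma7p12:
  fixes n d :: nat and q t :: "'a::field"
    and A As K :: "'a mat" and E Es :: "nat \<Rightarrow> 'a mat"
  assumes "alg_closed TYPE('a)"
    and "n > 0"
    and "q \<noteq> 0" and "not_root_of_unity q"
    and "d \<ge> 1"
    and "tridiagonal_system n A E As Es d"
    and "q_serre n q A As"
    and "\<forall>i\<le>d. img n (E i) = eigenspace n A (q powi (2 * int i - int d))"
    and "\<forall>i\<le>d. img n (Es i) = eigenspace n As (q powi (int d - 2 * int i))"
    and "K \<in> carrier_mat n n"
    and "\<forall>i\<le>d. \<forall>u\<in>split_decomp n E Es d i. K *\<^sub>v u = q powi (int d - 2 * int i) \<cdot>\<^sub>v u"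
  shows "q_serre n q A (t \<cdot>\<^sub>m As + (1 - t) \<cdot>\<^sub>m K)"
proof -
  note q0 = assms(3) and ts = assms(6) and KC = assms(10)
  have AC: "A \<in> carrier_mat n n" and AsC: "As \<in> carrier_mat n n" using ts unfolding tridiagonal_system_def by auto
  have R1: "\<forall>v\<in>carrier_vec n. K *\<^sub>v (As *\<^sub>v v - K *\<^sub>v v) = q^2 \<cdot>\<^sub>v (As *\<^sub>v (K *\<^sub>v v) - K *\<^sub>v (K *\<^sub>v v))"
    and R2: "\<forall>v\<in>carrier_vec n. K *\<^sub>v (A *\<^sub>v v) = inverse (q^2) \<cdot>\<^sub>v (A *\<^sub>v (K *\<^sub>v v)) + (1 - inverse (q^2)) \<cdot>\<^sub>v v"
    and Rs: "\<forall>v\<in>carrier_vec n. \<exists>x\<in>carrier_vec n. K *\<^sub>v x = v"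
    using split_main[OF q0 ts assms(8) assms(9) KC assms(11)] by auto
  have q2: "q^2 \<noteq> 1" and q4: "q^4 \<noteq> 1" using assms(4) unfolding not_root_of_unity_def by auto
  have Q: "qops n (\<lambda>v. A *\<^sub>v v) (\<lambda>v. K *\<^sub>v v) (\<lambda>v. As *\<^sub>v v - K *\<^sub>v v) q"
  proof (unfold_locales)
    show "q \<noteq> 0" by (rule q0)
  next
    fix x :: "'a vec" assume x: "x \<in> carrier_vec n"
    show "A *\<^sub>v x \<in> carrier_vec n" "K *\<^sub>v x \<in> carrier_vec n" "As *\<^sub>v x - K *\<^sub>v x \<in> carrier_vec n"
      using x AC KC AsC by auto
    show "K *\<^sub>v (As *\<^sub>v x - K *\<^sub>v x) = q\<^sup>2 \<cdot>\<^sub>v (As *\<^sub>v (K *\<^sub>v x) - K *\<^sub>v (K *\<^sub>v x))" using R1 x by auto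
    show "K *\<^sub>v (A *\<^sub>v x) = inverse (q\<^sup>2) \<cdot>\<^sub>v (A *\<^sub>v (K *\<^sub>v x)) + (1 - inverse (q\<^sup>2)) \<cdot>\<^sub>v x" using R2 x by auto
    fix c :: 'a
    show "A *\<^sub>v (c \<cdot>\<^sub>v x) = c \<cdot>\<^sub>v (A *\<^sub>v x)" "K *\<^sub>v (c \<cdot>\<^sub>v x) = c \<cdot>\<^sub>v (K *\<^sub>v x)"
      using x AC KC by (auto simp: mult_mat_vec)
    show "As *\<^sub>v (c \<cdot>\<^sub>v x) - K *\<^sub>v (c \<cdot>\<^sub>v x) = c \<cdot>\<^sub>v (As *\<^sub>v x - K *\<^sub>v x)"
      using x AsC KC by (auto simp: mult_mat_vec intro!: eq_vecI simp: algebra_simps)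
  next
    fix x y :: "'a vec" assume x: "x \<in> carrier_vec n" and y: "y \<in> carrier_vec n"
    show "A *\<^sub>v (x + y) = A *\<^sub>v x + A *\<^sub>v y" "K *\<^sub>v (x + y) = K *\<^sub>v x + K *\<^sub>v y"
      "A *\<^sub>v (x - y) = A *\<^sub>v x - A *\<^sub>v y" "K *\<^sub>v (x - y) = K *\<^sub>v x - K *\<^sub>v y"
      using x y AC KC by (auto simp: mult_add_distrib_mat_vec mult_minus_distrib_mat_vec)
    show "As *\<^sub>v (x + y) - K *\<^sub>v (x + y) = As *\<^sub>v x - K *\<^sub>v x + (As *\<^sub>v y - K *\<^sub>v y)"
      "As *\<^sub>v (x - y) - K *\<^sub>v (x - y) = As *\<^sub>v x - K *\<^sub>v x - (As *\<^sub>v y - K *\<^sub>v y)"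
      using x y AsC KC by (auto simp: mult_add_distrib_mat_vec mult_minus_distrib_mat_vec intro!: eq_vecI)
  qed
  let ?a = "\<lambda>v. A *\<^sub>v v" and ?k = "\<lambda>v. K *\<^sub>v v" and ?l = "\<lambda>v. As *\<^sub>v v - K *\<^sub>v v"
  have ac: "\<And>x. x \<in> carrier_vec n \<Longrightarrow> A *\<^sub>v x \<in> carrier_vec n" using AC by auto
  have kl1: "\<And>x. x \<in> carrier_vec n \<Longrightarrow> K *\<^sub>v x + (As *\<^sub>v x - K *\<^sub>v x) = As *\<^sub>v x"
    using AsC KC by (auto intro!: eq_vecI)
  have asc: "\<And>x. x \<in> carrier_vec n \<Longrightarrow> As *\<^sub>v x \<in> carrier_vec n" using AsC by auto
  have ser: "(A * A * A * As - qint3 q \<cdot>\<^sub>m (A * A * As * A) + qint3 q \<cdot>\<^sub>m (A * As * A * A) - As * A * A * A) = 0\<^sub>m n n"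
    "(As * As * As * A - qint3 q \<cdot>\<^sub>m (As * As * A * As) + qint3 q \<cdot>\<^sub>m (As * A * As * As) - A * As * As * As) = 0\<^sub>m n n"
    using assms(7) unfolding q_serre_def by auto
  have h1: "S1f q ?a (\<lambda>x. ?k x + ?l x) v = 0\<^sub>v n" if v: "v \<in> carrier_vec n" for v
  proof -
    have "S1f q ?a (\<lambda>x. ?k x + ?l x) v = S1f q ?a (\<lambda>x. As *\<^sub>v x) v"
      by (rule S1f_cong[OF ac kl1 v])
    also have "\<dots> = 0\<^sub>m n n *\<^sub>v v" unfolding ser(1)[symmetric] by (rule mv_S1[OF AC AsC v, symmetric])
    finally show ?thesis using v by (simp add: zmv)
  qed
  have h2: "Tf q ?a (\<lambda>x. ?k x + ?l x) (\<lambda>x. ?k x + ?l x) (\<lambda>x. ?k x + ?l x) v = 0\<^sub>v n" if v: "v \<in> carrier_vec n" for v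
  proof -
    have "Tf q ?a (\<lambda>x. ?k x + ?l x) (\<lambda>x. ?k x + ?l x) (\<lambda>x. ?k x + ?l x) v = Tf q ?a (\<lambda>x. As *\<^sub>v x) (\<lambda>x. As *\<^sub>v x) (\<lambda>x. As *\<^sub>v x) v"
      by (rule Tf_cong[OF ac kl1 _ v]) (use KC AsC in auto)
    also have "\<dots> = 0\<^sub>m n n *\<^sub>v v" unfolding ser(2)[symmetric] by (rule mv_T[OF AC AsC v, symmetric])
    finally show ?thesis using v by (simp add: zmv)
  qed
  define Bs where "Bs = t \<cdot>\<^sub>m As + (1 - t) \<cdot>\<^sub>m K"
  have BsC: "Bs \<in> carrier_mat n n" unfolding Bs_def using AsC KC by auto
  have bs: "Bs *\<^sub>v x = ?k x + t \<cdot>\<^sub>v ?l x" if x: "x \<in> carrier_vec n" for x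
  proof -
    have "Bs *\<^sub>v x = (t \<cdot>\<^sub>m As) *\<^sub>v x + ((1 - t) \<cdot>\<^sub>m K) *\<^sub>v x" unfolding Bs_def
      by (rule add_mult_distrib_mat_vec) (use AsC KC x in auto)
    also have "\<dots> = t \<cdot>\<^sub>v (As *\<^sub>v x) + (1 - t) \<cdot>\<^sub>v (K *\<^sub>v x)" using smat_mv[OF AsC x] smat_mv[OF KC x] by simp
    also have "\<dots> = ?k x + t \<cdot>\<^sub>v ?l x" using AsC KC x by (intro eq_vecI) (auto simp: algebra_simps)
    finally show ?thesis .
  qed
  have main: "S1f q ?a (\<lambda>x. ?k x + t \<cdot>\<^sub>v ?l x) v = 0\<^sub>v n \<and> Tf q ?a (\<lambda>x. ?k x + t \<cdot>\<^sub>v ?l x) (\<lambda>x. ?k x + t \<cdot>\<^sub>v ?l x) (\<lambda>x. ?k x + t \<cdot>\<^sub>v ?l x) v = 0\<^sub>v n"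
    if v: "v \<in> carrier_vec n" for v
    by (rule qops.alg_main[OF Q h1 h2 _ q2 q4 v]) (use Rs in auto)
  show ?thesis unfolding q_serre_def Bs_def[symmetric]
  proof
    show "A * A * A * Bs - qint3 q \<cdot>\<^sub>m (A * A * Bs * A) + qint3 q \<cdot>\<^sub>m (A * Bs * A * A) - Bs * A * A * A = 0\<^sub>m n n"
    proof (rule mat0)
      show "A * A * A * Bs - qint3 q \<cdot>\<^sub>m (A * A * Bs * A) + qint3 q \<cdot>\<^sub>m (A * Bs * A * A) - Bs * A * A * A \<in> carrier_mat n n"
        using AC BsC by auto
      fix v :: "'a vec" assume v: "v \<in> carrier_vec n"
      have "(A * A * A * Bs - qint3 q \<cdot>\<^sub>m (A * A * Bs * A) + qint3 q \<cdot>\<^sub>m (A * Bs * A * A) - Bs * A * A * A) *\<^sub>v v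
         = S1f q ?a (\<lambda>x. Bs *\<^sub>v x) v" by (rule mv_S1[OF AC BsC v])
      also have "\<dots> = S1f q ?a (\<lambda>x. ?k x + t \<cdot>\<^sub>v ?l x) v" by (rule S1f_cong[OF ac bs v])
      finally show "(A * A * A * Bs - qint3 q \<cdot>\<^sub>m (A * A * Bs * A) + qint3 q \<cdot>\<^sub>m (A * Bs * A * A) - Bs * A * A * A) *\<^sub>v v = 0\<^sub>v n"
        using main[OF v] by simp
    qed
    show "Bs * Bs * Bs * A - qint3 q \<cdot>\<^sub>m (Bs * Bs * A * Bs) + qint3 q \<cdot>\<^sub>m (Bs * A * Bs * Bs) - A * Bs * Bs * Bs = 0\<^sub>m n n"
    proof (rule mat0)
      show "Bs * Bs * Bs * A - qint3 q \<cdot>\<^sub>m (Bs * Bs * A * Bs) + qint3 q \<cdot>\<^sub>m (Bs * A * Bs * Bs) - A * Bs * Bs * Bs \<in> carrier_mat n n"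
        using AC BsC by auto
      fix v :: "'a vec" assume v: "v \<in> carrier_vec n"
      have "(Bs * Bs * Bs * A - qint3 q \<cdot>\<^sub>m (Bs * Bs * A * Bs) + qint3 q \<cdot>\<^sub>m (Bs * A * Bs * Bs) - A * Bs * Bs * Bs) *\<^sub>v v
         = Tf q ?a (\<lambda>x. Bs *\<^sub>v x) (\<lambda>x. Bs *\<^sub>v x) (\<lambda>x. Bs *\<^sub>v x) v" by (rule mv_T[OF AC BsC v])
      also have "\<dots> = Tf q ?a (\<lambda>x. ?k x + t \<cdot>\<^sub>v ?l x) (\<lambda>x. ?k x + t \<cdot>\<^sub>v ?l x) (\<lambda>x. ?k x + t \<cdot>\<^sub>v ?l x) v"
        by (rule Tf_cong[OF ac bs _ v]) (use BsC in auto)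
      finally show "(Bs * Bs * Bs * A - qint3 q \<cdot>\<^sub>m (Bs * Bs * A * Bs) + qint3 q \<cdot>\<^sub>m (Bs * A * Bs * Bs) - A * Bs * Bs * Bs) *\<^sub>v v = 0\<^sub>v n"
        using main[OF v] by simp
    qed
  qed
qed


end
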